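(* Let $L/F$ be a degree-2 datum (with $\theta$, $u$ as below). Let $Q$ be the quiver with vertices $1,2,3$ and arrows $\alpha:2\to1$, $\beta_0,\beta_1:3\to2$, $\gamma:1\to3$, with fields $F_1=F$, $F_2=F_3=L$ and bimodules $A_\alpha=F\otimes_FL$, $A_{\beta_0}=L\otimes_LL$, $A_{\beta_1}=L^{\theta}\otimes_LL$, $A_\gamma=L\otimes_FF$. Let $$\Lambda'=T_R(A)\big/\big\langle(\beta_0+\beta_1)\gamma,\ \tfrac12(\gamma\alpha+u^{-1}\gamma\alpha u),\ \tfrac12(\gamma\alpha-u^{-1}\gamma\alpha u),\ \alpha(\beta_0+\beta_1)\big\rangle$$ (with $u$ on the right of $\gamma\alpha$ meaning $ue_2$, and $u^{-1}$ on the left meaning $u^{-1}e_3$). Let $\widehat Q$ be the quiver with vertices $1,2,3$, arrows $\alpha:2\to1$, $\beta:3\to2$, $\gamma:1\to3$ and loops $s_2$ at $2$, $s_3$ at $3$, and let $\Lambda=F\widehat Q/\langle\alpha\beta,\beta\gamma,\gamma\alpha,\ s_2^2-u^2e_2,\ s_3^2-u^2e_3\rangle$ (ordinary path algebra over $F$, noting $u^2\in F$). Then $\Lambda'\cong\Lambda$ as $F$-algebras.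
   Context: Degree-2 datum: a degree-2 field extension $L/F$ with $\operatorname{char}F\neq2$; $\theta$ is the nontrivial element of $\operatorname{Gal}(L/F)$ and $u\in L\setminus\{0\}$ satisfies $\theta(u)=-u$, so $u^2\in F$. Twisted bimodules: for fields $K'''\subseteq K',K''$ and an automorphism $g$ of $K'''$, $K'^{g}\otimes_{K'''}K''$ is the $K'$-$K''$-bimodule where $K'^g$ is $K'$ with left multiplication and right action $m\star z=m\,g(z)$; when $g$ is the identity the superscript is omitted. Tensor ring of a species: for a quiver $Q$ with fields $F_i$ at vertices and bimodules $A_a$ for arrows $a:t(a)\to h(a)$ of the form above, $R=\prod_iF_i$ (idempotents $e_i$), $A=\bigoplus_aA_a$, $T_R(A)=\bigoplus_{n\ge0}A^{\otimes_Rn}$; $a$ denotes $1\otimes1\in A_a$; products right-to-left ($ab$ = $b$ then $a$); $az=g_a(z)a$ for $z$ in the intersection field; field elements adjacent to arrows lie in $R$ at the corresponding vertex. $\langle X\rangle$ is the two-sided ideal generated by $X$. *)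

theory Defs
  imports "HOL-Algebra.QuotRing"
begin

text \<open>L is the ambient type 'a (a field); F is a subfield of L given as a set.\<close>

definition is_subfield :: "'a::field set \<Rightarrow> bool" where
  "is_subfield F \<longleftrightarrow> 0 \<in> F \<and> 1 \<in> F \<and>
     (\<forall>x\<in>F. \<forall>y\<in>F. x + y \<in> F \<and> x * y \<in> F) \<and>
     (\<forall>x\<in>F. - x \<in> F \<and> inverse x \<in> F)"

definition degree_two :: "'a::field set \<Rightarrow> bool" where
  "degree_two F \<longleftrightarrow> (\<exists>b1 b2. \<forall>x::'a. \<exists>!cd. cd \<in> F \<times> F \<and> x = fst cd * b1 + snd cd * b2)"

definition galois_elt :: "'a::field set \<Rightarrow> ('a \<Rightarrow> 'a) \<Rightarrow> bool" where
  "galois_elt F \<theta> \<longleftrightarrow> bij \<theta> \<and> (\<forall>x y. \<theta> (x + y) = \<theta> x + \<theta> y) \<and>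
     (\<forall>x y. \<theta> (x * y) = \<theta> x * \<theta> y) \<and> (\<forall>c\<in>F. \<theta> c = c)"

definition deg2_datum :: "'a::field set \<Rightarrow> ('a \<Rightarrow> 'a) \<Rightarrow> 'a \<Rightarrow> bool" where
  "deg2_datum F \<theta> u \<longleftrightarrow> is_subfield F \<and> degree_two F \<and> (2::'a) \<noteq> 0 \<and>
     galois_elt F \<theta> \<and> \<theta> \<noteq> id \<and> u \<noteq> 0 \<and> \<theta> u = - u"

text \<open>Elements: finitely supported F-valued functions on words; the word [x1,...,xn]
  stands for the monomial x1 * ... * xn.\<close>

definition falg_carrier :: "'a::field set \<Rightarrow> ('g list \<Rightarrow> 'a) set" where
  "falg_carrier F = {p. finite {w. p w \<noteq> 0} \<and> (\<forall>w. p w \<in> F)}"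

definition fmul :: "('g list \<Rightarrow> 'a::field) \<Rightarrow> ('g list \<Rightarrow> 'a) \<Rightarrow> 'g list \<Rightarrow> 'a"
    (infixl \<open>[*]\<close> 70) where
  "p [*] q = (\<lambda>w. \<Sum>i\<le>length w. p (take i w) * q (drop i w))"

definition fadd :: "('g list \<Rightarrow> 'a::field) \<Rightarrow> ('g list \<Rightarrow> 'a) \<Rightarrow> 'g list \<Rightarrow> 'a"
    (infixl \<open>[+]\<close> 65) where
  "p [+] q = (\<lambda>w. p w + q w)"

definition fsub :: "('g list \<Rightarrow> 'a::field) \<Rightarrow> ('g list \<Rightarrow> 'a) \<Rightarrow> 'g list \<Rightarrow> 'a"
    (infixl \<open>[-]\<close> 65) where
  "p [-] q = (\<lambda>w. p w - q w)"

definition fsmul :: "'a::field \<Rightarrow> ('g list \<Rightarrow> 'a) \<Rightarrow> 'g list \<Rightarrow> 'a" where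
  "fsmul c p = (\<lambda>w. c * p w)"

definition fscal :: "'a::field \<Rightarrow> 'g list \<Rightarrow> 'a" where
  "fscal c = (\<lambda>w. if w = [] then c else 0)"

definition fgen :: "'g \<Rightarrow> 'g list \<Rightarrow> 'a::field" where
  "fgen x = (\<lambda>w. if w = [x] then 1 else 0)"

definition free_alg :: "'a::field set \<Rightarrow> ('g list \<Rightarrow> 'a) ring" where
  "free_alg F = \<lparr>carrier = falg_carrier F, mult = fmul, one = fscal 1,
                 zero = (\<lambda>w. 0), add = fadd\<rparr>"

definition presented :: "'a::field set \<Rightarrow> ('g list \<Rightarrow> 'a) set \<Rightarrow> ('g list \<Rightarrow> 'a) set ring" where
  "presented F S = free_alg F Quot genideal (free_alg F) S"

definition pclass :: "'a::field set \<Rightarrow> ('g list \<Rightarrow> 'a) set \<Rightarrow> ('g list \<Rightarrow> 'a) \<Rightarrow> ('g list \<Rightarrow> 'a) set" where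
  "pclass F S p = genideal (free_alg F) S +>\<^bsub>free_alg F\<^esub> p"

text \<open>Isomorphism of F-algebras: a ring isomorphism which is the identity on scalars
  (hence F-linear).\<close>
definition F_alg_iso :: "'a::field set \<Rightarrow> ('g list \<Rightarrow> 'a) set \<Rightarrow> ('h list \<Rightarrow> 'a) set \<Rightarrow> bool" where
  "F_alg_iso F S T \<longleftrightarrow> (\<exists>h \<in> ring_iso (presented F S) (presented F T).
       \<forall>c\<in>F. h (pclass F S (fscal c)) = pclass F T (fscal c))"

text \<open>Generators: E1 = e_1 (F at vertex 1); L2 z = z e_2 and L3 z = z e_3 for z in L
  (so e_2 = L2 1, e_3 = L3 1); the arrows alpha, beta_0, beta_1, gamma.\<close>
datatype 'a sgen = E1 | L2 'a | L3 'a | SAlpha | SBeta0 | SBeta1 | SGamma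

text \<open>Relations presenting T_R(A) as an F-algebra: R = F x L x L, and for each arrow
  a = e_h a e_t together with a z = g_a(z) a for z in the intersection field
  (trivial when the intersection field is F, since F is central).\<close>
definition TR_rels :: "'a::field set \<Rightarrow> ('a \<Rightarrow> 'a) \<Rightarrow> ('a sgen list \<Rightarrow> 'a) set" where
  "TR_rels F \<theta> =
     {fgen E1 [*] fgen E1 [-] fgen E1}
   \<union> {fgen (L2 z) [*] fgen (L2 w) [-] fgen (L2 (z * w)) | z w. True}
   \<union> {fgen (L3 z) [*] fgen (L3 w) [-] fgen (L3 (z * w)) | z w. True}
   \<union> {fgen (L2 z) [+] fgen (L2 w) [-] fgen (L2 (z + w)) | z w. True}
   \<union> {fgen (L3 z) [+] fgen (L3 w) [-] fgen (L3 (z + w)) | z w. True}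
   \<union> {fscal c [*] fgen (L2 1) [-] fgen (L2 c) | c. c \<in> F}
   \<union> {fscal c [*] fgen (L3 1) [-] fgen (L3 c) | c. c \<in> F}
   \<union> {fgen E1 [+] fgen (L2 1) [+] fgen (L3 1) [-] fscal 1}
   \<union> {fgen E1 [*] fgen (L2 z) | z. True} \<union> {fgen (L2 z) [*] fgen E1 | z. True}
   \<union> {fgen E1 [*] fgen (L3 z) | z. True} \<union> {fgen (L3 z) [*] fgen E1 | z. True}
   \<union> {fgen (L2 z) [*] fgen (L3 w) | z w. True} \<union> {fgen (L3 w) [*] fgen (L2 z) | z w. True}
   \<union> {fgen SAlpha [-] fgen E1 [*] fgen SAlpha [*] fgen (L2 1),
      fgen SBeta0 [-] fgen (L2 1) [*] fgen SBeta0 [*] fgen (L3 1),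
      fgen SBeta1 [-] fgen (L2 1) [*] fgen SBeta1 [*] fgen (L3 1),
      fgen SGamma [-] fgen (L3 1) [*] fgen SGamma [*] fgen E1}
   \<union> {fgen SBeta0 [*] fgen (L3 z) [-] fgen (L2 z) [*] fgen SBeta0 | z. True}
   \<union> {fgen SBeta1 [*] fgen (L3 z) [-] fgen (L2 (\<theta> z)) [*] fgen SBeta1 | z. True}"

definition Lambda'_rels :: "'a::field set \<Rightarrow> ('a \<Rightarrow> 'a) \<Rightarrow> 'a \<Rightarrow> ('a sgen list \<Rightarrow> 'a) set" where
  "Lambda'_rels F \<theta> u = TR_rels F \<theta> \<union>
     {(fgen SBeta0 [+] fgen SBeta1) [*] fgen SGamma,
      fsmul (1/2) (fgen SGamma [*] fgen SAlpha
          [+] fgen (L3 (inverse u)) [*] fgen SGamma [*] fgen SAlpha [*] fgen (L2 u)),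
      fsmul (1/2) (fgen SGamma [*] fgen SAlpha
          [-] fgen (L3 (inverse u)) [*] fgen SGamma [*] fgen SAlpha [*] fgen (L2 u)),
      fgen SAlpha [*] (fgen SBeta0 [+] fgen SBeta1)}"

datatype qgen = V1 | V2 | V3 | QAlpha | QBeta | QGamma | QS2 | QS3

fun qvert :: "nat \<Rightarrow> qgen" where
  "qvert (Suc 0) = V1" | "qvert (Suc (Suc 0)) = V2" | "qvert _ = V3"

definition pathalg_rels :: "(qgen list \<Rightarrow> 'a::field) set" where
  "pathalg_rels =
     {fgen (qvert i) [*] fgen (qvert j) [-] (if i = j then fgen (qvert i) else (\<lambda>w. 0))
        | i j. i \<in> {1,2,3} \<and> j \<in> {1,2,3}}
   \<union> {fgen V1 [+] fgen V2 [+] fgen V3 [-] fscal 1,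
      fgen QAlpha [-] fgen V1 [*] fgen QAlpha [*] fgen V2,
      fgen QBeta [-] fgen V2 [*] fgen QBeta [*] fgen V3,
      fgen QGamma [-] fgen V3 [*] fgen QGamma [*] fgen V1,
      fgen QS2 [-] fgen V2 [*] fgen QS2 [*] fgen V2,
      fgen QS3 [-] fgen V3 [*] fgen QS3 [*] fgen V3}"

definition Lambda_rels :: "'a::field \<Rightarrow> (qgen list \<Rightarrow> 'a) set" where
  "Lambda_rels u = pathalg_rels \<union>
     {fgen QAlpha [*] fgen QBeta, fgen QBeta [*] fgen QGamma, fgen QGamma [*] fgen QAlpha,
      fgen QS2 [*] fgen QS2 [-] fsmul (u * u) (fgen V2),
      fgen QS3 [*] fgen QS3 [-] fsmul (u * u) (fgen V3)}"

end

theory Submission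
  imports Defs
begin


lemma sum_swap_tri:
  fixes f :: "nat \<Rightarrow> nat \<Rightarrow> 'b::comm_monoid_add"
  shows "(\<Sum>i\<le>n. \<Sum>j\<le>i. f j i) = (\<Sum>j\<le>n. \<Sum>i\<in>{j..n}. f j i)"
proof (induction n)
  case 0 then show ?case by simp
next
  case (Suc n)
  have "(\<Sum>j\<le>Suc n. \<Sum>i\<in>{j..Suc n}. f j i) =
        (\<Sum>j\<le>n. \<Sum>i\<in>{j..Suc n}. f j i) + f (Suc n) (Suc n)" by simp
  also have "(\<Sum>j\<le>n. \<Sum>i\<in>{j..Suc n}. f j i) = (\<Sum>j\<le>n. (\<Sum>i\<in>{j..n}. f j i) + f j (Suc n))"
    by (rule sum.cong) (auto simp: sum.atLeast_Suc_atMost_Suc_shift add.commute)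
  finally show ?case using Suc by (simp add: sum.distrib add.assoc)
qed

lemma fmul_assoc: fixes p q r :: "'g list \<Rightarrow> 'b::field" shows "(p [*] q) [*] r = p [*] (q [*] r)"
proof (rule ext)
  fix w :: "'g list"
  let ?n = "length w"
  have "((p [*] q) [*] r) w = (\<Sum>i\<le>?n. \<Sum>j\<le>i. p (take j w) * q (drop j (take i w)) * r (drop i w))"
    by (auto simp: fmul_def sum_distrib_right min_def intro!: sum.cong)
  also have "\<dots> = (\<Sum>j\<le>?n. \<Sum>i\<in>{j..?n}. p (take j w) * q (drop j (take i w)) * r (drop i w))"
    by (rule sum_swap_tri)
  also have "\<dots> = (p [*] (q [*] r)) w"
    unfolding fmul_def sum_distrib_left
  proof (rule sum.cong[OF refl])
    fix j assume j: "j \<in> {..?n}"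
    show "(\<Sum>i\<in>{j..?n}. p (take j w) * q (drop j (take i w)) * r (drop i w)) =
          (\<Sum>k\<le>length (drop j w). p (take j w) * (q (take k (drop j w)) * r (drop k (drop j w))))"
    proof -
      have "(\<Sum>k\<le>length (drop j w). p (take j w) * (q (take k (drop j w)) * r (drop k (drop j w))))
          = (\<Sum>k\<le>?n - j. p (take j w) * (q (drop j (take (k + j) w)) * r (drop (k + j) w)))"
        by (simp add: take_drop add.commute)
      also have "\<dots> = (\<Sum>i\<in>{j..?n}. p (take j w) * q (drop j (take i w)) * r (drop i w))"
        using j
        by (intro sum.reindex_bij_witness[where i="\<lambda>i. i - j" and j="\<lambda>k. k + j"]) (auto simp: mult.assoc)
      finally show ?thesis by simp
    qed
  qed
  finally show "((p [*] q) [*] r) w = (p [*] (q [*] r)) w" .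
qed

lemma fmul_distrib_l: "p [*] (q [+] r) = (p [*] q) [+] (p [*] r)"
  by (auto simp: fmul_def fadd_def distrib_left sum.distrib)

lemma fmul_distrib_r: "(p [+] q) [*] r = (p [*] r) [+] (q [*] r)"
  by (auto simp: fmul_def fadd_def distrib_right sum.distrib)

lemma fscal_fmul: "fscal c [*] p = fsmul c p"
proof (rule ext)
  fix w
  have "(fscal c [*] p) w = (\<Sum>i\<le>length w. if i = 0 then c * p w else 0)"
    unfolding fmul_def fscal_def by (rule sum.cong) auto
  also have "\<dots> = c * p w" by (simp add: sum.delta)
  finally show "(fscal c [*] p) w = fsmul c p w" by (simp add: fsmul_def)
qed

lemma fmul_fscal: "p [*] fscal c = fsmul c p"
proof (rule ext)
  fix w
  have "(p [*] fscal c) w = (\<Sum>i\<le>length w. if i = length w then c * p w else 0)"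
    unfolding fmul_def fscal_def by (rule sum.cong) auto
  also have "\<dots> = c * p w" by (simp add: sum.delta)
  finally show "(p [*] fscal c) w = fsmul c p w" by (simp add: fsmul_def)
qed

lemma fsmul_1[simp]: "fsmul 1 p = p" by (simp add: fsmul_def)

lemma subf_simps:
  assumes "is_subfield F"
  shows "0 \<in> F" "1 \<in> F" "x \<in> F \<Longrightarrow> y \<in> F \<Longrightarrow> x + y \<in> F"
    "x \<in> F \<Longrightarrow> y \<in> F \<Longrightarrow> x * y \<in> F" "x \<in> F \<Longrightarrow> - x \<in> F"
    "x \<in> F \<Longrightarrow> inverse x \<in> F"
    "x \<in> F \<Longrightarrow> y \<in> F \<Longrightarrow> x - y \<in> F"
    "x \<in> F \<Longrightarrow> y \<in> F \<Longrightarrow> x / y \<in> F"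
proof -
  note h = assms[unfolded is_subfield_def]
  show "0 \<in> F" "1 \<in> F" using h by blast+
  show "x \<in> F \<Longrightarrow> y \<in> F \<Longrightarrow> x + y \<in> F" using h by blast
  show "x \<in> F \<Longrightarrow> y \<in> F \<Longrightarrow> x * y \<in> F" using h by blast
  show "x \<in> F \<Longrightarrow> - x \<in> F" using h by blast
  show "x \<in> F \<Longrightarrow> inverse x \<in> F" using h by blast
  show "x \<in> F \<Longrightarrow> y \<in> F \<Longrightarrow> x - y \<in> F"
  proof -
    assume "x \<in> F" "y \<in> F"
    then have "x + - y \<in> F" using h by blast
    then show ?thesis by simp
  qed
  show "x \<in> F \<Longrightarrow> y \<in> F \<Longrightarrow> x / y \<in> F"
  proof -
    assume "x \<in> F" "y \<in> F"
    then have "x * inverse y \<in> F" using h by blast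
    then show ?thesis by (simp add: divide_inverse)
  qed
qed

lemma sub_sum_in:
  assumes "is_subfield F" "\<And>x. x \<in> A \<Longrightarrow> f x \<in> F"
  shows "sum f A \<in> F"
  using assms(2)
proof (induction A rule: infinite_finite_induct)
  case (infinite A) then show ?case using subf_simps(1)[OF assms(1)] by simp
next
  case empty then show ?case using subf_simps(1)[OF assms(1)] by simp
next
  case (insert x A) then show ?case using subf_simps(3)[OF assms(1)] by simp
qed

lemma supp_fmul:
  "{w. (p [*] q) w \<noteq> 0} \<subseteq> (\<lambda>(x, y). x @ y) ` ({w. p w \<noteq> 0} \<times> {w. q w \<noteq> 0})"
proof
  fix w assume "w \<in> {w. (p [*] q) w \<noteq> 0}"
  then have "(\<Sum>i\<le>length w. p (take i w) * q (drop i w)) \<noteq> 0" by (simp add: fmul_def)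
  then obtain i where "p (take i w) * q (drop i w) \<noteq> 0" by (meson sum.neutral)
  then show "w \<in> (\<lambda>(x, y). x @ y) ` ({w. p w \<noteq> 0} \<times> {w. q w \<noteq> 0})"
    by (auto intro!: image_eqI[where x="(take i w, drop i w)"])
qed

lemma carrier_free[simp]: "carrier (free_alg F) = falg_carrier F"
  by (simp add: free_alg_def)
lemma mult_free[simp]: "mult (free_alg F) = fmul" by (simp add: free_alg_def)
lemma add_free[simp]: "add (free_alg F) = fadd" by (simp add: free_alg_def)
lemma one_free[simp]: "one (free_alg F) = fscal 1" by (simp add: free_alg_def)
lemma zero_free[simp]: "zero (free_alg F) = (\<lambda>w. 0)" by (simp add: free_alg_def)

context fixes F :: "'a::field set" assumes sf: "is_subfield F"
begin

lemma fmul_closed: "p \<in> falg_carrier F \<Longrightarrow> q \<in> falg_carrier F \<Longrightarrow> p [*] q \<in> falg_carrier F"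
  unfolding falg_carrier_def
  apply (auto intro!: finite_subset[OF supp_fmul])
  unfolding fmul_def by (auto intro!: sub_sum_in[OF sf] subf_simps[OF sf])

lemma fadd_closed: "p \<in> falg_carrier F \<Longrightarrow> q \<in> falg_carrier F \<Longrightarrow> p [+] q \<in> falg_carrier F"
  unfolding falg_carrier_def fadd_def
  apply (auto intro!: finite_subset[of _ "{w. p w \<noteq> 0} \<union> {w. q w \<noteq> 0}"])
  by (auto intro!: subf_simps[OF sf])

lemma fsmul_closed: "c \<in> F \<Longrightarrow> p \<in> falg_carrier F \<Longrightarrow> fsmul c p \<in> falg_carrier F"
  unfolding falg_carrier_def fsmul_def
  apply (auto intro!: finite_subset[of _ "{w. p w \<noteq> 0}"])
  by (auto intro!: subf_simps[OF sf])

lemma fsub_closed: "p \<in> falg_carrier F \<Longrightarrow> q \<in> falg_carrier F \<Longrightarrow> p [-] q \<in> falg_carrier F"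
  unfolding falg_carrier_def fsub_def
  apply (auto intro!: finite_subset[of _ "{w. p w \<noteq> 0} \<union> {w. q w \<noteq> 0}"])
  by (auto intro!: subf_simps[OF sf])

lemma fscal_closed: "c \<in> F \<Longrightarrow> fscal c \<in> falg_carrier F"
  unfolding falg_carrier_def fscal_def
  by (auto intro!: finite_subset[of _ "{[]}"] subf_simps[OF sf])

lemma fgen_closed: "fgen x \<in> falg_carrier F"
  unfolding falg_carrier_def fgen_def
  by (auto intro!: finite_subset[of _ "{[x]}"] subf_simps[OF sf])

lemma zero_closed: "(\<lambda>w. 0) \<in> falg_carrier F"
  unfolding falg_carrier_def by (auto intro!: subf_simps[OF sf])

lemma free_ring: "ring (free_alg F)"
proof (rule ringI)
  show "abelian_group (free_alg F)"
  proof (rule abelian_groupI)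
    fix x assume x: "x \<in> carrier (free_alg F)"
    show "\<exists>y\<in>carrier (free_alg F). y \<oplus>\<^bsub>free_alg F\<^esub> x = \<zero>\<^bsub>free_alg F\<^esub>"
      using x sf
      by (intro bexI[where x="\<lambda>w. - x w"]) (auto simp: fadd_def falg_carrier_def intro: subf_simps)
  qed (auto simp: zero_closed fadd_closed[unfolded fadd_def] fadd_def add.assoc add.commute)
  show "monoid (free_alg F)"
    by (rule monoidI) (auto simp: fmul_closed fscal_closed sf subf_simps fmul_assoc fscal_fmul fmul_fscal)
qed (auto simp: fmul_distrib_l fmul_distrib_r)

lemma free_ainv: "x \<in> falg_carrier F \<Longrightarrow> a_inv (free_alg F) x = (\<lambda>w. - x w)"
proof -
  assume x: "x \<in> falg_carrier F"
  interpret ring "free_alg F" by (rule free_ring)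
  have "(\<lambda>w. - x w) \<in> falg_carrier F" using fsmul_closed[of "-1" x] x subf_simps(2,5)[OF sf]
    by (simp add: fsmul_def)
  then show ?thesis using x by (intro minus_equality) (auto simp: fadd_def)
qed

lemma fsub_minus: "p \<in> falg_carrier F \<Longrightarrow> q \<in> falg_carrier F \<Longrightarrow> p [-] q = a_minus (free_alg F) p q"
  by (simp add: a_minus_def free_ainv fsub_def fadd_def)

end


definition delta :: "'g list \<Rightarrow> 'g list \<Rightarrow> 'a::field" where
  "delta w = (\<lambda>v. if v = w then 1 else 0)"

fun mono :: "('g \<Rightarrow> 'h list \<Rightarrow> 'a::field) \<Rightarrow> 'g list \<Rightarrow> 'h list \<Rightarrow> 'a" where
  "mono \<phi> [] = fscal 1"
| "mono \<phi> (x # w) = \<phi> x [*] mono \<phi> w"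

definition subst :: "('g \<Rightarrow> 'h list \<Rightarrow> 'a::field) \<Rightarrow> ('g list \<Rightarrow> 'a) \<Rightarrow> 'h list \<Rightarrow> 'a" where
  "subst \<phi> p = (\<lambda>v. \<Sum>w\<in>{w. p w \<noteq> 0}. p w * mono \<phi> w v)"

lemma carrier_fin: "p \<in> falg_carrier F \<Longrightarrow> finite {w. p w \<noteq> 0}"
  by (simp add: falg_carrier_def)

lemma subst_superset:
  assumes "finite A" "{w. p w \<noteq> 0} \<subseteq> A"
  shows "subst \<phi> p = (\<lambda>v. \<Sum>w\<in>A. p w * mono \<phi> w v)"
  unfolding subst_def
  by (rule ext, rule sum.mono_neutral_left) (use assms in auto)

lemma fsmul_fmul: "fsmul c p [*] q = fsmul c (p [*] q)"
  by (simp add: fsmul_def fmul_def sum_distrib_left mult.assoc)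
lemma fmul_fsmul: "p [*] fsmul c q = fsmul c (p [*] q)"
  by (simp add: fsmul_def fmul_def sum_distrib_left mult.left_commute)

lemma mono_append: "mono \<phi> (a @ b) = mono \<phi> a [*] mono \<phi> b"
  by (induction a) (simp_all add: fscal_fmul fmul_assoc)

lemma fmul_sums:
  "(\<lambda>v. \<Sum>a\<in>A. f a v) [*] (\<lambda>v. \<Sum>b\<in>B. g b v) = (\<lambda>v. \<Sum>a\<in>A. \<Sum>b\<in>B. (f a [*] g b) v)"
proof (rule ext)
  fix v
  have "((\<lambda>v. \<Sum>a\<in>A. f a v) [*] (\<lambda>v. \<Sum>b\<in>B. g b v)) v
      = (\<Sum>i\<le>length v. \<Sum>a\<in>A. \<Sum>b\<in>B. f a (take i v) * g b (drop i v))"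
    unfolding fmul_def by (simp only: sum_product)
  also have "\<dots> = (\<Sum>a\<in>A. \<Sum>i\<le>length v. \<Sum>b\<in>B. f a (take i v) * g b (drop i v))"
    by (rule sum.swap)
  also have "\<dots> = (\<Sum>a\<in>A. \<Sum>b\<in>B. \<Sum>i\<le>length v. f a (take i v) * g b (drop i v))"
    by (rule sum.cong[OF refl], rule sum.swap)
  finally show "((\<lambda>v. \<Sum>a\<in>A. f a v) [*] (\<lambda>v. \<Sum>b\<in>B. g b v)) v = (\<Sum>a\<in>A. \<Sum>b\<in>B. (f a [*] g b) v)"
    by (simp add: fmul_def)
qed

lemma fadd_sums:
  "(\<lambda>v. \<Sum>a\<in>A. f a v) [+] (\<lambda>v. \<Sum>a\<in>A. g a v) = (\<lambda>v. \<Sum>a\<in>A. f a v + g a v)"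
  by (simp add: fadd_def sum.distrib)

lemma subst_mult:
  assumes fp: "finite {w. p w \<noteq> 0}" and fq: "finite {w. q w \<noteq> 0}"
  shows "subst \<phi> (p [*] q) = subst \<phi> p [*] subst \<phi> q"
proof -
  define Sp where "Sp = {w. p w \<noteq> 0}"
  define Sq where "Sq = {w. q w \<noteq> 0}"
  define A where "A = (\<lambda>(x, y). x @ y) ` (Sp \<times> Sq)"
  have fA: "finite A" unfolding A_def Sp_def Sq_def using fp fq by simp
  have sA: "{w. (p [*] q) w \<noteq> 0} \<subseteq> A" unfolding A_def Sp_def Sq_def by (rule supp_fmul)
  have rhs: "subst \<phi> p [*] subst \<phi> q = (\<lambda>v. \<Sum>a\<in>Sp. \<Sum>b\<in>Sq. p a * q b * mono \<phi> (a @ b) v)"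
    unfolding subst_def Sp_def[symmetric] Sq_def[symmetric] fmul_sums
    using fmul_fsmul[of "mono \<phi> _" "q _" "mono \<phi> _"] fsmul_fmul[of "p _" "mono \<phi> _"]
    by (simp add: mono_append fsmul_def[symmetric] fsmul_fmul fmul_fsmul) (simp add: fsmul_def mult.assoc mult.left_commute)
  show ?thesis
  proof (rule ext)
    fix v
    define G where "G = (\<lambda>(a, b). p a * q b * mono \<phi> (a @ b) v)"
    have "subst \<phi> (p [*] q) v = (\<Sum>w\<in>A. \<Sum>i\<le>length w. G (take i w, drop i w))"
      unfolding subst_superset[OF fA sA] by (simp add: fmul_def G_def sum_distrib_right)
    also have "\<dots> = (\<Sum>wi\<in>Sigma A (\<lambda>w. {..length w}). G (take (snd wi) (fst wi), drop (snd wi) (fst wi)))"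
      using sum.Sigma[OF fA, of "\<lambda>w. {..length w}" "\<lambda>w i. G (take i w, drop i w)"] by (simp add: split_def)
    also have "\<dots> = (\<Sum>ab\<in>(\<lambda>wi. (take (snd wi) (fst wi), drop (snd wi) (fst wi))) ` Sigma A (\<lambda>w. {..length w}). G ab)"
      by (rule sum.reindex[symmetric, unfolded comp_def]) (auto simp: inj_on_def, metis append_take_drop_id, metis length_take min_absorb2)
    also have "\<dots> = (\<Sum>ab\<in>Sp \<times> Sq. G ab)"
    proof (rule sum.mono_neutral_right)
      show "finite ((\<lambda>wi. (take (snd wi) (fst wi), drop (snd wi) (fst wi))) ` Sigma A (\<lambda>w. {..length w}))"
        using fA by auto
      show "Sp \<times> Sq \<subseteq> (\<lambda>wi. (take (snd wi) (fst wi), drop (snd wi) (fst wi))) ` Sigma A (\<lambda>w. {..length w})"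
      proof
        fix ab assume ab: "ab \<in> Sp \<times> Sq"
        obtain a b where "ab = (a, b)" by fastforce
        then show "ab \<in> (\<lambda>wi. (take (snd wi) (fst wi), drop (snd wi) (fst wi))) ` Sigma A (\<lambda>w. {..length w})"
          using ab unfolding A_def
          by (intro image_eqI[where x="(a @ b, length a)"]) auto
      qed
      show "\<forall>i\<in>(\<lambda>wi. (take (snd wi) (fst wi), drop (snd wi) (fst wi))) ` Sigma A (\<lambda>w. {..length w}) - Sp \<times> Sq. G i = 0"
        unfolding G_def Sp_def Sq_def by auto
    qed
    also have "\<dots> = (subst \<phi> p [*] subst \<phi> q) v"
      unfolding rhs G_def by (simp add: sum.cartesian_product)
    finally show "subst \<phi> (p [*] q) v = (subst \<phi> p [*] subst \<phi> q) v" .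
  qed
qed

lemma subst_add:
  assumes fp: "finite {w. p w \<noteq> 0}" and fq: "finite {w. q w \<noteq> 0}"
  shows "subst \<phi> (p [+] q) = subst \<phi> p [+] subst \<phi> q"
proof -
  let ?A = "{w. p w \<noteq> 0} \<union> {w. q w \<noteq> 0}"
  have f: "finite ?A" using fp fq by simp
  have "subst \<phi> (p [+] q) = (\<lambda>v. \<Sum>w\<in>?A. (p [+] q) w * mono \<phi> w v)"
    by (rule subst_superset[OF f]) (auto simp: fadd_def)
  also have "\<dots> = subst \<phi> p [+] subst \<phi> q"
    by (subst subst_superset[OF f, of p], force, subst subst_superset[OF f, of q], force)
       (simp add: fadd_def sum.distrib distrib_right)
  finally show ?thesis .
qed

lemma subst_fscal: "subst \<phi> (fscal c) = fscal c"
proof -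
  have "subst \<phi> (fscal c) = (\<lambda>v. \<Sum>w\<in>{[]}. fscal c w * mono \<phi> w v)"
    by (rule subst_superset) (auto simp: fscal_def)
  then show ?thesis by (simp add: fscal_def fun_eq_iff)
qed

lemma subst_fgen: "subst \<phi> (fgen x) = \<phi> x"
proof -
  have "subst \<phi> (fgen x) = (\<lambda>v. \<Sum>w\<in>{[x]}. fgen x w * mono \<phi> w v)"
    by (rule subst_superset) (auto simp: fgen_def)
  then show ?thesis by (simp add: fgen_def fmul_fscal)
qed

context fixes F :: "'a::field set" assumes sf: "is_subfield F"
begin

lemma sum_closed: "(\<And>a. a \<in> A \<Longrightarrow> f a \<in> falg_carrier F) \<Longrightarrow> (\<lambda>v. \<Sum>a\<in>A. f a v) \<in> falg_carrier F"
proof (induction A rule: infinite_finite_induct)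
  case (infinite A) then show ?case using zero_closed[OF sf] by simp
next
  case empty then show ?case using zero_closed[OF sf] by simp
next
  case (insert x A) then show ?case using fadd_closed[OF sf, of "f x" "(\<lambda>v. \<Sum>a\<in>A. f a v)"]
    by (simp add: fadd_def)
qed

lemma mono_closed: "(\<And>x. \<phi> x \<in> falg_carrier F) \<Longrightarrow> mono \<phi> w \<in> falg_carrier F"
  by (induction w) (auto intro!: fmul_closed[OF sf] fscal_closed[OF sf] subf_simps[OF sf])

lemma subst_closed: "(\<And>x. \<phi> x \<in> falg_carrier F) \<Longrightarrow> p \<in> falg_carrier F \<Longrightarrow> subst \<phi> p \<in> falg_carrier F"
proof -
  assume h: "\<And>x. \<phi> x \<in> falg_carrier F" and p: "p \<in> falg_carrier F"
  have "subst \<phi> p = (\<lambda>v. \<Sum>w\<in>{w. p w \<noteq> 0}. fsmul (p w) (mono \<phi> w) v)"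
    by (simp add: subst_def fsmul_def)
  also have "\<dots> \<in> falg_carrier F"
    by (rule sum_closed, rule fsmul_closed[OF sf]) (use p h mono_closed in \<open>auto simp: falg_carrier_def\<close>)
  finally show ?thesis .
qed

lemma subst_hom:
  assumes "\<And>x. \<phi> x \<in> falg_carrier F"
  shows "subst \<phi> \<in> ring_hom (free_alg F) (free_alg F)"
  by (rule ring_hom_memI)
     (auto simp: subst_closed assms subst_mult subst_add subst_fscal carrier_fin)

end


lemma fgen_fmul_delta: "fgen x [*] delta w = delta (x # w)"
proof (rule ext)
  fix v :: "'a list"
  show "(fgen x [*] delta w) v = (delta (x # w) :: 'a list \<Rightarrow> 'b::field) v"
  proof (cases v)
    case Nil then show ?thesis by (simp add: fmul_def fgen_def delta_def)
  next
    case (Cons y v')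
    have "(fgen x [*] delta w) v = (\<Sum>i\<le>Suc (length v'). fgen x (take i v) * delta w (drop i v))"
      by (simp add: fmul_def Cons)
    also have "\<dots> = (\<Sum>i\<le>Suc (length v'). if i = 1 then (if y = x \<and> v' = w then 1 else 0) else 0)"
      by (rule sum.cong) (auto simp: Cons fgen_def delta_def take_Cons' split: if_splits)
    also have "\<dots> = delta (x # w) v" by (subst sum.delta) (auto simp: Cons delta_def)
    finally show ?thesis .
  qed
qed

lemma mono_fgen: "mono fgen w = delta w"
proof (induction w)
  case Nil then show ?case by (simp add: fscal_def delta_def fun_eq_iff)
next
  case (Cons a w) then show ?case by (simp add: fgen_fmul_delta)
qed

lemma hom_agree:
  fixes F :: "'a::field set" and Q :: "('c, 'm) ring_scheme"
    and h1 h2 :: "('g list \<Rightarrow> 'a) \<Rightarrow> 'c"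
  assumes sf: "is_subfield F" and Q: "ring Q"
    and h1: "h1 \<in> ring_hom (free_alg F) Q" and h2: "h2 \<in> ring_hom (free_alg F) Q"
    and gen: "\<And>x. h1 (fgen x) = h2 (fgen x)"
    and sc: "\<And>c. c \<in> F \<Longrightarrow> h1 (fscal c) = h2 (fscal c)"
  shows "p \<in> falg_carrier F \<Longrightarrow> h1 p = h2 p"
proof -
  have R: "ring (free_alg F :: ('g list \<Rightarrow> 'a) ring)" by (rule free_ring[OF sf])
  have dc: "delta w \<in> falg_carrier F" for w :: "'g list"
    using mono_closed[OF sf, of fgen w] fgen_closed[OF sf] unfolding mono_fgen by blast
  have dl: "h1 (delta w) = h2 (delta w)" for w :: "'g list"
  proof (induction w)
    case Nil
    have "delta [] = (fscal 1 :: 'g list \<Rightarrow> 'a)" by (simp add: delta_def fscal_def fun_eq_iff)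
    then show ?case using sc subf_simps(2)[OF sf] by simp
  next
    case (Cons x w)
    have "h1 (delta (x # w)) = h1 (fgen x [*] delta w)" by (simp add: fgen_fmul_delta)
    also have "\<dots> = h1 (fgen x) \<otimes>\<^bsub>Q\<^esub> h1 (delta w)"
      using ring_hom_mult[OF h1, of "fgen x" "delta w"] fgen_closed[OF sf, of x] dc by simp
    also have "\<dots> = h2 (fgen x) \<otimes>\<^bsub>Q\<^esub> h2 (delta w)" using gen Cons by simp
    also have "\<dots> = h2 (fgen x [*] delta w)"
      using ring_hom_mult[OF h2, of "fgen x" "delta w"] fgen_closed[OF sf, of x] dc by simp
    finally show ?case by (simp add: fgen_fmul_delta)
  qed
  have main: "finite A \<Longrightarrow> \<forall>p\<in>falg_carrier F. {w. p w \<noteq> 0} \<subseteq> A \<longrightarrow> h1 p = h2 p" for A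
  proof (induction A rule: finite_induct)
    case empty
    show ?case
    proof (intro ballI impI)
      fix p :: "'g list \<Rightarrow> 'a" assume "{w. p w \<noteq> 0} \<subseteq> {}"
      then have "p = \<zero>\<^bsub>free_alg F\<^esub>" by (auto simp: fun_eq_iff)
      then show "h1 p = h2 p" using ring_hom_zero[OF h1 R Q] ring_hom_zero[OF h2 R Q] by simp
    qed
  next
    case (insert a A)
    show ?case
    proof (intro ballI impI)
      fix p :: "'g list \<Rightarrow> 'a" assume p: "p \<in> falg_carrier F" and s: "{w. p w \<noteq> 0} \<subseteq> insert a A"
      define p' where "p' = p(a := 0)"
      have pa: "p a \<in> F" using p by (simp add: falg_carrier_def)
      have p'c: "p' \<in> falg_carrier F" using p subf_simps(1)[OF sf]
        unfolding p'_def falg_carrier_def by (auto intro: finite_subset[of _ "{w. p w \<noteq> 0}"])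
      have "{w. p' w \<noteq> 0} \<subseteq> A" using s by (auto simp: p'_def)
      then have e': "h1 p' = h2 p'" using insert.IH p'c by blast
      have decomp: "p = (fscal (p a) [*] delta a) [+] p'"
        by (auto simp: fscal_fmul fsmul_def fadd_def delta_def p'_def fun_eq_iff)
      have c1: "fscal (p a) \<in> falg_carrier F" using fscal_closed[OF sf pa] .
      have m: "fscal (p a) [*] delta a \<in> falg_carrier F" using fmul_closed[OF sf c1 dc] .
      have hh: "h p = (h (fscal (p a)) \<otimes>\<^bsub>Q\<^esub> h (delta a)) \<oplus>\<^bsub>Q\<^esub> h p'"
        if hh: "h \<in> ring_hom (free_alg F) Q" for h
      proof -
        have "h p = h (fscal (p a) [*] delta a) \<oplus>\<^bsub>Q\<^esub> h p'"
          using ring_hom_add[OF hh, of "fscal (p a) [*] delta a" p'] m p'c decomp by simp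
        also have "h (fscal (p a) [*] delta a) = h (fscal (p a)) \<otimes>\<^bsub>Q\<^esub> h (delta a)"
          using ring_hom_mult[OF hh, of "fscal (p a)" "delta a"] c1 dc by simp
        finally show ?thesis .
      qed
      have "h1 p = (h1 (fscal (p a)) \<otimes>\<^bsub>Q\<^esub> h1 (delta a)) \<oplus>\<^bsub>Q\<^esub> h1 p'" by (rule hh[OF h1])
      also have "\<dots> = (h2 (fscal (p a)) \<otimes>\<^bsub>Q\<^esub> h2 (delta a)) \<oplus>\<^bsub>Q\<^esub> h2 p'"
        using sc[OF pa] dl e' by simp
      also have "\<dots> = h2 p" by (rule hh[OF h2, symmetric])
      finally show "h1 p = h2 p" .
    qed
  qed
  assume "p \<in> falg_carrier F"
  then show "h1 p = h2 p" using main[of "{w. p w \<noteq> 0}"] by (simp add: falg_carrier_def)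
qed


lemma rcos_eq_zero:
  assumes "ideal I R" "x \<in> carrier R" "I +>\<^bsub>R\<^esub> x = I"
  shows "x \<in> I"
proof -
  interpret ideal I R by fact
  have "x \<in> I +>\<^bsub>R\<^esub> x" using a_rcos_self[OF assms(2)] .
  then show ?thesis using assms(3) by simp
qed

lemma abstract_iso:
  fixes F :: "'a::field set" and S :: "('g list \<Rightarrow> 'a) set" and T :: "('h list \<Rightarrow> 'a) set"
    and \<phi> :: "'g \<Rightarrow> 'h list \<Rightarrow> 'a" and \<psi> :: "'h \<Rightarrow> 'g list \<Rightarrow> 'a"
  assumes sf: "is_subfield F"
    and Sc: "S \<subseteq> falg_carrier F" and Tc: "T \<subseteq> falg_carrier F"
    and \<phi>c: "\<And>x. \<phi> x \<in> falg_carrier F" and \<psi>c: "\<And>y. \<psi> y \<in> falg_carrier F"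
    and \<phi>S: "\<And>r. r \<in> S \<Longrightarrow> subst \<phi> r \<in> genideal (free_alg F) T"
    and \<psi>T: "\<And>r. r \<in> T \<Longrightarrow> subst \<psi> r \<in> genideal (free_alg F) S"
    and inv1: "\<And>x. genideal (free_alg F) S +>\<^bsub>free_alg F\<^esub> subst \<psi> (\<phi> x)
                  = genideal (free_alg F) S +>\<^bsub>free_alg F\<^esub> fgen x"
    and inv2: "\<And>y. genideal (free_alg F) T +>\<^bsub>free_alg F\<^esub> subst \<phi> (\<psi> y)
                  = genideal (free_alg F) T +>\<^bsub>free_alg F\<^esub> fgen y"
  shows "F_alg_iso F S T"
proof -
  define R where "R = (free_alg F :: ('g list \<Rightarrow> 'a) ring)"
  define R' where "R' = (free_alg F :: ('h list \<Rightarrow> 'a) ring)"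
  define I where "I = genideal R S"
  define J where "J = genideal R' T"
  interpret R: ring R unfolding R_def by (rule free_ring[OF sf])
  interpret R': ring R' unfolding R'_def by (rule free_ring[OF sf])
  have Iid: "ideal I R" unfolding I_def by (rule R.genideal_ideal) (use Sc in \<open>simp add: R_def\<close>)
  have Jid: "ideal J R'" unfolding J_def by (rule R'.genideal_ideal) (use Tc in \<open>simp add: R'_def\<close>)
  interpret I: ideal I R by (rule Iid)
  interpret J: ideal J R' by (rule Jid)
  have QI: "ring (R Quot I)" by (rule I.quotient_is_ring)
  have QJ: "ring (R' Quot J)" by (rule J.quotient_is_ring)
  have \<sigma>h: "subst \<phi> \<in> ring_hom R R'" unfolding R_def R'_def
    using subst_hom[OF sf, of \<phi>] \<phi>c
    by (simp add: ring_hom_def)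
  have \<tau>h: "subst \<psi> \<in> ring_hom R' R" unfolding R_def R'_def
    using subst_hom[OF sf, of \<psi>] \<psi>c
    by (simp add: ring_hom_def)
  have \<sigma>rh: "ring_hom_ring R R' (subst \<phi>)" by (rule ring_hom_ringI2[OF R.ring_axioms R'.ring_axioms \<sigma>h])
  have \<tau>rh: "ring_hom_ring R' R (subst \<psi>)" by (rule ring_hom_ringI2[OF R'.ring_axioms R.ring_axioms \<tau>h])
  have \<pi>I: "(+>\<^bsub>R\<^esub>) I \<in> ring_hom R (R Quot I)" by (rule I.rcos_ring_hom)
  have \<pi>J: "(+>\<^bsub>R'\<^esub>) J \<in> ring_hom R' (R' Quot J)" by (rule J.rcos_ring_hom)
  have carR: "carrier R = falg_carrier F" "carrier R' = falg_carrier F" by (simp_all add: R_def R'_def)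
  have \<sigma>c: "subst \<phi> p \<in> carrier R'" if "p \<in> carrier R" for p
    using ring_hom_closed[OF \<sigma>h that] .
  have \<tau>c: "subst \<psi> p \<in> carrier R" if "p \<in> carrier R'" for p
    using ring_hom_closed[OF \<tau>h that] .
  have \<sigma>I: "subst \<phi> p \<in> J" if "p \<in> I" for p
  proof -
    have "I \<subseteq> {r \<in> carrier R. subst \<phi> r \<in> J}"
      unfolding I_def
      by (rule R.genideal_minimal[OF ring_hom_ring.ideal_vimage[OF \<sigma>rh Jid]])
         (use Sc \<phi>S in \<open>auto simp: R_def J_def R'_def\<close>)
    then show ?thesis using that by blast
  qed
  have \<tau>J: "subst \<psi> p \<in> I" if "p \<in> J" for p
  proof -
    have "J \<subseteq> {r \<in> carrier R'. subst \<psi> r \<in> I}"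
      unfolding J_def
      by (rule R'.genideal_minimal[OF ring_hom_ring.ideal_vimage[OF \<tau>rh Iid]])
         (use Tc \<psi>T in \<open>auto simp: R_def I_def R'_def\<close>)
    then show ?thesis using that by blast
  qed
  have back1: "I +>\<^bsub>R\<^esub> subst \<psi> (subst \<phi> p) = I +>\<^bsub>R\<^esub> p" if "p \<in> carrier R" for p
  proof -
    have "(((+>\<^bsub>R\<^esub>) I) \<circ> subst \<psi> \<circ> subst \<phi>) p = (+>\<^bsub>R\<^esub>) I p"
    proof (rule hom_agree[OF sf QI, of _ _ p])
      show "(+>\<^bsub>R\<^esub>) I \<circ> subst \<psi> \<circ> subst \<phi> \<in> ring_hom (free_alg F) (R Quot I)"
        using ring_hom_trans[OF ring_hom_trans[OF \<sigma>h \<tau>h] \<pi>I] by (simp add: R_def comp_assoc)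
      show "(+>\<^bsub>R\<^esub>) I \<in> ring_hom (free_alg F) (R Quot I)" using \<pi>I by (simp add: R_def)
      show "p \<in> falg_carrier F" using that carR by simp
      fix x show "((+>\<^bsub>R\<^esub>) I \<circ> subst \<psi> \<circ> subst \<phi>) (fgen x) = I +>\<^bsub>R\<^esub> fgen x"
        using inv1[of x] by (simp add: subst_fgen I_def R_def)
    next
      fix c show "((+>\<^bsub>R\<^esub>) I \<circ> subst \<psi> \<circ> subst \<phi>) (fscal c) = I +>\<^bsub>R\<^esub> fscal c"
        by (simp add: subst_fscal)
    qed
    then show ?thesis by simp
  qed
  have back2: "J +>\<^bsub>R'\<^esub> subst \<phi> (subst \<psi> p) = J +>\<^bsub>R'\<^esub> p" if "p \<in> carrier R'" for p
  proof -
    have "(((+>\<^bsub>R'\<^esub>) J) \<circ> subst \<phi> \<circ> subst \<psi>) p = (+>\<^bsub>R'\<^esub>) J p"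
    proof (rule hom_agree[OF sf QJ, of _ _ p])
      show "(+>\<^bsub>R'\<^esub>) J \<circ> subst \<phi> \<circ> subst \<psi> \<in> ring_hom (free_alg F) (R' Quot J)"
        using ring_hom_trans[OF ring_hom_trans[OF \<tau>h \<sigma>h] \<pi>J] by (simp add: R'_def comp_assoc)
      show "(+>\<^bsub>R'\<^esub>) J \<in> ring_hom (free_alg F) (R' Quot J)" using \<pi>J by (simp add: R'_def)
      show "p \<in> falg_carrier F" using that carR by simp
      fix x show "((+>\<^bsub>R'\<^esub>) J \<circ> subst \<phi> \<circ> subst \<psi>) (fgen x) = J +>\<^bsub>R'\<^esub> fgen x"
        using inv2[of x] by (simp add: subst_fgen J_def R'_def)
    next
      fix c show "((+>\<^bsub>R'\<^esub>) J \<circ> subst \<phi> \<circ> subst \<psi>) (fscal c) = J +>\<^bsub>R'\<^esub> fscal c"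
        by (simp add: subst_fscal)
    qed
    then show ?thesis by simp
  qed
  define f where "f = ((+>\<^bsub>R'\<^esub>) J) \<circ> subst \<phi>"
  have fh: "f \<in> ring_hom R (R' Quot J)" unfolding f_def by (rule ring_hom_trans[OF \<sigma>h \<pi>J])
  have frh: "ring_hom_ring R (R' Quot J) f" by (rule ring_hom_ringI2[OF R.ring_axioms QJ fh])
  have ker: "a_kernel R (R' Quot J) f = I"
  proof
    show "a_kernel R (R' Quot J) f \<subseteq> I"
    proof
      fix x assume "x \<in> a_kernel R (R' Quot J) f"
      then have x: "x \<in> carrier R" and fx: "J +>\<^bsub>R'\<^esub> subst \<phi> x = J"
        by (auto simp: a_kernel_def' f_def FactRing_def)
      have "subst \<phi> x \<in> J" by (rule rcos_eq_zero[OF Jid \<sigma>c[OF x] fx])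
      then have "subst \<psi> (subst \<phi> x) \<in> I" by (rule \<tau>J)
      then have "I +>\<^bsub>R\<^esub> subst \<psi> (subst \<phi> x) = I" by (rule I.a_rcos_const)
      then have "I +>\<^bsub>R\<^esub> x = I" using back1[OF x] by simp
      then show "x \<in> I" by (rule rcos_eq_zero[OF Iid x])
    qed
    show "I \<subseteq> a_kernel R (R' Quot J) f"
    proof
      fix x assume x: "x \<in> I"
      have "x \<in> carrier R" using x I.a_subset by blast
      moreover have "J +>\<^bsub>R'\<^esub> subst \<phi> x = J" by (rule J.a_rcos_const[OF \<sigma>I[OF x]])
      ultimately show "x \<in> a_kernel R (R' Quot J) f"
        by (auto simp: a_kernel_def' f_def FactRing_def)
    qed
  qed
  have surj: "f ` carrier R = carrier (R' Quot J)"
  proof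
    show "f ` carrier R \<subseteq> carrier (R' Quot J)" using ring_hom_closed[OF fh] by blast
    show "carrier (R' Quot J) \<subseteq> f ` carrier R"
    proof
      fix X assume "X \<in> carrier (R' Quot J)"
      then obtain y where y: "y \<in> carrier R'" and X: "X = J +>\<^bsub>R'\<^esub> y"
        by (auto simp: FactRing_def A_RCOSETS_def')
      have "X = f (subst \<psi> y)" using back2[OF y] X by (simp add: f_def)
      then show "X \<in> f ` carrier R" using \<tau>c[OF y] by blast
    qed
  qed
  have iso: "(\<lambda>X. the_elem (f ` X)) \<in> ring_iso (R Quot I) (R' Quot J)"
    using ring_hom_ring.FactRing_iso_set[OF frh surj] ker by simp
  show ?thesis
    unfolding F_alg_iso_def
  proof (rule bexI[OF _ iso[unfolded R_def R'_def I_def J_def presented_def[symmetric]]], intro ballI)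
    fix c assume c: "c \<in> F"
    have cc: "fscal c \<in> carrier R" using fscal_closed[OF sf c] carR by simp
    have "the_elem (f ` (I +>\<^bsub>R\<^esub> fscal c)) = f (fscal c)"
      using ring_hom_ring.the_elem_simp[OF frh cc] ker by simp
    then show "the_elem (f ` pclass F S (fscal c)) = pclass F T (fscal c)"
      by (simp add: pclass_def f_def subst_fscal I_def R_def J_def R'_def)
  qed
qed


lemma (in ring) minus_from_add:
  "a = b \<oplus> c \<Longrightarrow> b \<in> carrier R \<Longrightarrow> c \<in> carrier R \<Longrightarrow> b = a \<ominus> c"
  by (simp add: a_minus_def a_assoc r_neg)

locale push =
  fixes F :: "'a::field set" and Q :: "('c, 'm) ring_scheme" and h :: "('g list \<Rightarrow> 'a) \<Rightarrow> 'c"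
  assumes sf: "is_subfield F" and Qr: "ring Q" and hh: "h \<in> ring_hom (free_alg F) Q"
begin

lemma cl[simp]:
  "fgen x \<in> falg_carrier F"
  "c \<in> F \<Longrightarrow> fscal c \<in> falg_carrier F"
  "p \<in> falg_carrier F \<Longrightarrow> q \<in> falg_carrier F \<Longrightarrow> p [*] q \<in> falg_carrier F"
  "p \<in> falg_carrier F \<Longrightarrow> q \<in> falg_carrier F \<Longrightarrow> p [+] q \<in> falg_carrier F"
  "p \<in> falg_carrier F \<Longrightarrow> q \<in> falg_carrier F \<Longrightarrow> p [-] q \<in> falg_carrier F"
  "c \<in> F \<Longrightarrow> p \<in> falg_carrier F \<Longrightarrow> fsmul c p \<in> falg_carrier F"
  "(\<lambda>w. 0) \<in> falg_carrier F"
  using fgen_closed[OF sf] fscal_closed[OF sf] fmul_closed[OF sf] fadd_closed[OF sf]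
    fsub_closed[OF sf] fsmul_closed[OF sf] zero_closed[OF sf] by auto

lemma hm: "p \<in> falg_carrier F \<Longrightarrow> q \<in> falg_carrier F \<Longrightarrow> h (p [*] q) = h p \<otimes>\<^bsub>Q\<^esub> h q"
  using ring_hom_mult[OF hh, of p q] by simp
lemma ha: "p \<in> falg_carrier F \<Longrightarrow> q \<in> falg_carrier F \<Longrightarrow> h (p [+] q) = h p \<oplus>\<^bsub>Q\<^esub> h q"
  using ring_hom_add[OF hh, of p q] by simp
lemma hc: "p \<in> falg_carrier F \<Longrightarrow> h p \<in> carrier Q"
  using ring_hom_closed[OF hh, of p] by simp
lemma hs: "p \<in> falg_carrier F \<Longrightarrow> q \<in> falg_carrier F \<Longrightarrow> h (p [-] q) = h p \<ominus>\<^bsub>Q\<^esub> h q"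
proof -
  assume p: "p \<in> falg_carrier F" and q: "q \<in> falg_carrier F"
  have "p = (p [-] q) [+] q" by (simp add: fsub_def fadd_def)
  then have "h p = h (p [-] q) \<oplus>\<^bsub>Q\<^esub> h q" using ha[of "p [-] q" q] p q by simp
  then show ?thesis using ring.minus_from_add[OF Qr] hc p q by simp
qed
lemma hsm: "c \<in> F \<Longrightarrow> p \<in> falg_carrier F \<Longrightarrow> h (fsmul c p) = h (fscal c) \<otimes>\<^bsub>Q\<^esub> h p"
  using hm[of "fscal c" p] by (simp add: fscal_fmul)
lemma h0: "h (\<lambda>w. 0) = \<zero>\<^bsub>Q\<^esub>"
  using ring_hom_zero[OF hh free_ring[OF sf] Qr] by simp

lemmas push_simps = hm ha hs hsm h0

end

locale alg = ring Q for Q :: "('c, 'm) ring_scheme" (structure) +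
  fixes F :: "'a::field set" and \<kappa> :: "'a \<Rightarrow> 'c"
  assumes sf: "is_subfield F"
    and \<kappa>c[simp]: "c \<in> F \<Longrightarrow> \<kappa> c \<in> carrier Q"
    and \<kappa>add: "a \<in> F \<Longrightarrow> b \<in> F \<Longrightarrow> \<kappa> (a + b) = \<kappa> a \<oplus> \<kappa> b"
    and \<kappa>mult: "a \<in> F \<Longrightarrow> b \<in> F \<Longrightarrow> \<kappa> (a * b) = \<kappa> a \<otimes> \<kappa> b"
    and \<kappa>one: "\<kappa> 1 = \<one>"
    and \<kappa>central: "c \<in> F \<Longrightarrow> x \<in> carrier Q \<Longrightarrow> \<kappa> c \<otimes> x = x \<otimes> \<kappa> c"
begin

lemma Fc[simp]:
  "0 \<in> F" "1 \<in> F" "x \<in> F \<Longrightarrow> y \<in> F \<Longrightarrow> x + y \<in> F"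
  "x \<in> F \<Longrightarrow> y \<in> F \<Longrightarrow> x * y \<in> F" "x \<in> F \<Longrightarrow> - x \<in> F"
  "x \<in> F \<Longrightarrow> inverse x \<in> F"
  "x \<in> F \<Longrightarrow> y \<in> F \<Longrightarrow> x - y \<in> F"
  "x \<in> F \<Longrightarrow> y \<in> F \<Longrightarrow> x / y \<in> F"
  using subf_simps[OF sf] by auto

lemma \<kappa>zero: "\<kappa> 0 = \<zero>"
proof -
  have "\<kappa> 0 = \<kappa> 0 \<oplus> \<kappa> 0" using \<kappa>add[of 0 0] by simp
  then show ?thesis using add.l_cancel_one'[of "\<kappa> 0" "\<kappa> 0"] by simp
qed

lemma sc_l: "a \<in> F \<Longrightarrow> b \<in> F \<Longrightarrow> x \<in> carrier Q \<Longrightarrow> \<kappa> a \<otimes> (\<kappa> b \<otimes> x) = \<kappa> (a * b) \<otimes> x"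
  by (simp add: \<kappa>mult m_assoc)
lemma sc_m: "b \<in> F \<Longrightarrow> x \<in> carrier Q \<Longrightarrow> y \<in> carrier Q \<Longrightarrow> x \<otimes> (\<kappa> b \<otimes> y) = \<kappa> b \<otimes> (x \<otimes> y)"
proof -
  assume b: "b \<in> F" and x: "x \<in> carrier Q" and y: "y \<in> carrier Q"
  have "x \<otimes> (\<kappa> b \<otimes> y) = (x \<otimes> \<kappa> b) \<otimes> y" using b x y by (simp add: m_assoc)
  also have "\<dots> = (\<kappa> b \<otimes> x) \<otimes> y" using \<kappa>central[OF b x] by simp
  also have "\<dots> = \<kappa> b \<otimes> (x \<otimes> y)" using b x y by (simp add: m_assoc)
  finally show ?thesis .
qed
lemma sc_add: "a \<in> F \<Longrightarrow> b \<in> F \<Longrightarrow> x \<in> carrier Q \<Longrightarrow> \<kappa> a \<otimes> x \<oplus> \<kappa> b \<otimes> x = \<kappa> (a + b) \<otimes> x"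
  by (simp add: \<kappa>add l_distr)
lemma sc_one: "x \<in> carrier Q \<Longrightarrow> \<kappa> 1 \<otimes> x = x"
  by (simp add: \<kappa>one)
lemma sc_zero: "x \<in> carrier Q \<Longrightarrow> \<kappa> 0 \<otimes> x = \<zero>"
  by (simp add: \<kappa>zero)
lemma \<kappa>neg: "a \<in> F \<Longrightarrow> \<kappa> (- a) = \<ominus> \<kappa> a"
proof -
  assume a: "a \<in> F"
  have "\<kappa> (- a) \<oplus> \<kappa> a = \<zero>" using \<kappa>add[of "-a" a] a by (simp add: \<kappa>zero)
  then show ?thesis using a by (intro minus_equality[symmetric]) auto
qed
lemma sc_neg: "a \<in> F \<Longrightarrow> x \<in> carrier Q \<Longrightarrow> \<kappa> (- a) \<otimes> x = \<ominus> (\<kappa> a \<otimes> x)"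
  by (simp add: \<kappa>neg l_minus)

lemma two_F[simp]: "2 \<in> F" "1/2 \<in> F"
proof -
  show "2 \<in> F" using Fc(3)[OF Fc(2) Fc(2)] by simp
  then show "1/2 \<in> F" by simp
qed

lemma double: "x \<in> carrier Q \<Longrightarrow> x \<oplus> x = \<kappa> 2 \<otimes> x"
proof -
  assume x: "x \<in> carrier Q"
  have "\<kappa> 2 = \<kappa> 1 \<oplus> \<kappa> 1" using \<kappa>add[of 1 1] by simp
  then show ?thesis using x by (simp add: \<kappa>one l_distr)
qed

lemma half_sc: "(2::'a) \<noteq> 0 \<Longrightarrow> x \<in> carrier Q \<Longrightarrow> \<kappa> (1/2) \<otimes> (\<kappa> 2 \<otimes> x) = x"
  using sc_l[of "1/2" 2 x] by (simp add: \<kappa>one)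

lemma half1: "(2::'a) \<noteq> 0 \<Longrightarrow> x \<in> carrier Q \<Longrightarrow> y \<in> carrier Q \<Longrightarrow>
   \<kappa> (1/2) \<otimes> (x \<oplus> y) \<oplus> \<kappa> (1/2) \<otimes> (x \<ominus> y) = x"
proof -
  assume t: "(2::'a) \<noteq> 0" and x: "x \<in> carrier Q" and y: "y \<in> carrier Q"
  have "(x \<oplus> y) \<oplus> (x \<ominus> y) = x \<oplus> x" using x y by (simp add: minus_eq a_ac r_neg2)
    (metis a_assoc a_comm a_inv_closed a_closed r_neg r_zero)
  then have "\<kappa> (1/2) \<otimes> (x \<oplus> y) \<oplus> \<kappa> (1/2) \<otimes> (x \<ominus> y) = \<kappa> (1/2) \<otimes> (x \<oplus> x)"
    using x y by (simp add: r_distr[symmetric])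
  also have "\<dots> = x" using x t by (simp add: double half_sc)
  finally show ?thesis .
qed

lemma half2: "(2::'a) \<noteq> 0 \<Longrightarrow> x \<in> carrier Q \<Longrightarrow> y \<in> carrier Q \<Longrightarrow>
   \<kappa> (1/2) \<otimes> ((x \<oplus> y) \<ominus> (x \<ominus> y)) = y"
proof -
  assume t: "(2::'a) \<noteq> 0" and x: "x \<in> carrier Q" and y: "y \<in> carrier Q"
  have "(x \<oplus> y) \<ominus> (x \<ominus> y) = y \<oplus> y" using x y
    by (simp add: minus_eq minus_add a_ac) (metis a_assoc a_comm a_inv_closed a_closed r_neg r_zero minus_minus)
  then show ?thesis using x y t by (simp add: double half_sc)
qed

end


context ring begin
lemma sand_l: "x = a \<otimes> x \<otimes> b \<Longrightarrow> a \<otimes> a = a \<Longrightarrow> x \<in> carrier R \<Longrightarrow> a \<in> carrier R \<Longrightarrow> b \<in> carrier R \<Longrightarrow> a \<otimes> x = x"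
  by (metis m_assoc m_closed)
lemma sand_r: "x = a \<otimes> x \<otimes> b \<Longrightarrow> b \<otimes> b = b \<Longrightarrow> x \<in> carrier R \<Longrightarrow> a \<in> carrier R \<Longrightarrow> b \<in> carrier R \<Longrightarrow> x \<otimes> b = x"
  by (metis m_assoc m_closed)
lemma sand_l0: "x = a \<otimes> x \<otimes> b \<Longrightarrow> c \<otimes> a = \<zero> \<Longrightarrow> x \<in> carrier R \<Longrightarrow> a \<in> carrier R \<Longrightarrow> b \<in> carrier R \<Longrightarrow> c \<in> carrier R \<Longrightarrow> c \<otimes> x = \<zero>"
  by (metis m_assoc m_closed l_null)
lemma sand_r0: "x = a \<otimes> x \<otimes> b \<Longrightarrow> b \<otimes> c = \<zero> \<Longrightarrow> x \<in> carrier R \<Longrightarrow> a \<in> carrier R \<Longrightarrow> b \<in> carrier R \<Longrightarrow> c \<in> carrier R \<Longrightarrow> x \<otimes> c = \<zero>"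
  by (metis m_assoc m_closed r_null)
lemma ass: "x \<otimes> y = z \<Longrightarrow> x \<in> carrier R \<Longrightarrow> y \<in> carrier R \<Longrightarrow> w \<in> carrier R \<Longrightarrow> x \<otimes> (y \<otimes> w) = z \<otimes> w"
  by (metis m_assoc)
end

locale LamQ = alg Q F \<kappa> for Q :: "('c, 'm) ring_scheme" (structure) and F :: "'a::field set" and \<kappa> +
  fixes U V :: 'a and e1 e2 e3 al be ga s2 s3 :: 'c
  assumes UF[simp]: "U \<in> F" and VF[simp]: "V \<in> F" and UV: "U * V = 1"
  and cr[simp]: "e1 \<in> carrier Q" "e2 \<in> carrier Q" "e3 \<in> carrier Q" "al \<in> carrier Q"
       "be \<in> carrier Q" "ga \<in> carrier Q" "s2 \<in> carrier Q" "s3 \<in> carrier Q"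
  and idem: "e1 \<otimes> e1 = e1" "e2 \<otimes> e2 = e2" "e3 \<otimes> e3 = e3"
  and orth: "e1 \<otimes> e2 = \<zero>" "e1 \<otimes> e3 = \<zero>" "e2 \<otimes> e1 = \<zero>" "e2 \<otimes> e3 = \<zero>" "e3 \<otimes> e1 = \<zero>" "e3 \<otimes> e2 = \<zero>"
  and sum1: "e1 \<oplus> e2 \<oplus> e3 = \<one>"
  and sand: "al = e1 \<otimes> al \<otimes> e2" "be = e2 \<otimes> be \<otimes> e3" "ga = e3 \<otimes> ga \<otimes> e1"
        "s2 = e2 \<otimes> s2 \<otimes> e2" "s3 = e3 \<otimes> s3 \<otimes> e3"
  and zr: "al \<otimes> be = \<zero>" "be \<otimes> ga = \<zero>" "ga \<otimes> al = \<zero>"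
  and sq: "s2 \<otimes> s2 = \<kappa> U \<otimes> e2" "s3 \<otimes> s3 = \<kappa> U \<otimes> e3"
  and two: "(2::'a) \<noteq> 0"
begin

lemma UV2: "U * (V * x) = x" using UV by (metis mult.assoc mult_1)

lemma rels1:
  "e1 \<otimes> al = al" "al \<otimes> e2 = al" "e2 \<otimes> be = be" "be \<otimes> e3 = be" "e3 \<otimes> ga = ga" "ga \<otimes> e1 = ga"
  "e2 \<otimes> s2 = s2" "s2 \<otimes> e2 = s2" "e3 \<otimes> s3 = s3" "s3 \<otimes> e3 = s3"
  using sand_l[OF sand(1)] sand_r[OF sand(1)] sand_l[OF sand(2)] sand_r[OF sand(2)]
    sand_l[OF sand(3)] sand_r[OF sand(3)] sand_l[OF sand(4)] sand_r[OF sand(4)]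
    sand_l[OF sand(5)] sand_r[OF sand(5)] idem by simp_all

lemma rels0:
  "e2 \<otimes> al = \<zero>" "e3 \<otimes> al = \<zero>" "al \<otimes> e1 = \<zero>" "al \<otimes> e3 = \<zero>"
  "e1 \<otimes> be = \<zero>" "e3 \<otimes> be = \<zero>" "be \<otimes> e1 = \<zero>" "be \<otimes> e2 = \<zero>"
  "e1 \<otimes> ga = \<zero>" "e2 \<otimes> ga = \<zero>" "ga \<otimes> e2 = \<zero>" "ga \<otimes> e3 = \<zero>"
  "e1 \<otimes> s2 = \<zero>" "e3 \<otimes> s2 = \<zero>" "s2 \<otimes> e1 = \<zero>" "s2 \<otimes> e3 = \<zero>"
  "e1 \<otimes> s3 = \<zero>" "e2 \<otimes> s3 = \<zero>" "s3 \<otimes> e1 = \<zero>" "s3 \<otimes> e2 = \<zero>"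
  using sand_l0[OF sand(1)] sand_r0[OF sand(1)] sand_l0[OF sand(2)] sand_r0[OF sand(2)]
    sand_l0[OF sand(3)] sand_r0[OF sand(3)] sand_l0[OF sand(4)] sand_r0[OF sand(4)]
    sand_l0[OF sand(5)] sand_r0[OF sand(5)] orth by simp_all

lemma rels00:
  "al \<otimes> al = \<zero>" "al \<otimes> ga = \<zero>" "al \<otimes> s3 = \<zero>"
  "be \<otimes> al = \<zero>" "be \<otimes> be = \<zero>" "be \<otimes> s2 = \<zero>"
  "ga \<otimes> be = \<zero>" "ga \<otimes> ga = \<zero>" "ga \<otimes> s2 = \<zero>" "ga \<otimes> s3 = \<zero>"
  "s2 \<otimes> al = \<zero>" "s2 \<otimes> ga = \<zero>" "s2 \<otimes> s3 = \<zero>"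
  "s3 \<otimes> al = \<zero>" "s3 \<otimes> be = \<zero>" "s3 \<otimes> s2 = \<zero>"
  using sand_r0[OF sand(1)] sand_r0[OF sand(2)] sand_r0[OF sand(3)] sand_r0[OF sand(4)]
    sand_r0[OF sand(5)] rels0 by simp_all

lemmas basic = idem orth rels1 rels0 rels00 zr sq

lemmas basic_ass = basic[THEN ass]

lemma gsc: "b \<in> F \<Longrightarrow> y \<in> carrier Q \<Longrightarrow> e1 \<otimes> (\<kappa> b \<otimes> y) = \<kappa> b \<otimes> (e1 \<otimes> y)"
  "b \<in> F \<Longrightarrow> y \<in> carrier Q \<Longrightarrow> e2 \<otimes> (\<kappa> b \<otimes> y) = \<kappa> b \<otimes> (e2 \<otimes> y)"
  "b \<in> F \<Longrightarrow> y \<in> carrier Q \<Longrightarrow> e3 \<otimes> (\<kappa> b \<otimes> y) = \<kappa> b \<otimes> (e3 \<otimes> y)"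
  "b \<in> F \<Longrightarrow> y \<in> carrier Q \<Longrightarrow> al \<otimes> (\<kappa> b \<otimes> y) = \<kappa> b \<otimes> (al \<otimes> y)"
  "b \<in> F \<Longrightarrow> y \<in> carrier Q \<Longrightarrow> be \<otimes> (\<kappa> b \<otimes> y) = \<kappa> b \<otimes> (be \<otimes> y)"
  "b \<in> F \<Longrightarrow> y \<in> carrier Q \<Longrightarrow> ga \<otimes> (\<kappa> b \<otimes> y) = \<kappa> b \<otimes> (ga \<otimes> y)"
  "b \<in> F \<Longrightarrow> y \<in> carrier Q \<Longrightarrow> s2 \<otimes> (\<kappa> b \<otimes> y) = \<kappa> b \<otimes> (s2 \<otimes> y)"
  "b \<in> F \<Longrightarrow> y \<in> carrier Q \<Longrightarrow> s3 \<otimes> (\<kappa> b \<otimes> y) = \<kappa> b \<otimes> (s3 \<otimes> y)"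
  "b \<in> F \<Longrightarrow> e1 \<otimes> \<kappa> b = \<kappa> b \<otimes> e1"
  "b \<in> F \<Longrightarrow> e2 \<otimes> \<kappa> b = \<kappa> b \<otimes> e2"
  "b \<in> F \<Longrightarrow> e3 \<otimes> \<kappa> b = \<kappa> b \<otimes> e3"
  "b \<in> F \<Longrightarrow> al \<otimes> \<kappa> b = \<kappa> b \<otimes> al"
  "b \<in> F \<Longrightarrow> be \<otimes> \<kappa> b = \<kappa> b \<otimes> be"
  "b \<in> F \<Longrightarrow> ga \<otimes> \<kappa> b = \<kappa> b \<otimes> ga"
  "b \<in> F \<Longrightarrow> s2 \<otimes> \<kappa> b = \<kappa> b \<otimes> s2"
  "b \<in> F \<Longrightarrow> s3 \<otimes> \<kappa> b = \<kappa> b \<otimes> s3"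
  by (simp_all add: sc_m \<kappa>central m_assoc)

lemma ainv_sc: "y \<in> carrier Q \<Longrightarrow> \<ominus> y = \<kappa> (-1) \<otimes> y"
  using sc_neg[of 1 y] by (simp add: \<kappa>one)

lemma kmerge: "a \<in> F \<Longrightarrow> b \<in> F \<Longrightarrow> \<kappa> a \<otimes> \<kappa> b = \<kappa> (a * b)"
  by (simp add: \<kappa>mult)

lemmas N = basic basic_ass gsc sc_l kmerge m_assoc l_distr r_distr a_assoc a_comm a_lcomm
  minus_eq ainv_sc \<kappa>add l_null r_null l_zero r_zero \<kappa>zero \<kappa>one l_one r_one UV UV2 mult_ac

definition "P2 a b = \<kappa> a \<otimes> e2 \<oplus> \<kappa> b \<otimes> s2"
definition "P3 a b = \<kappa> a \<otimes> e3 \<oplus> \<kappa> b \<otimes> s3"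
definition "B0' = \<kappa> (1/2) \<otimes> (be \<oplus> \<kappa> V \<otimes> (s2 \<otimes> be \<otimes> s3))"
definition "B1' = \<kappa> (1/2) \<otimes> (be \<ominus> \<kappa> V \<otimes> (s2 \<otimes> be \<otimes> s3))"

lemma Bsum: "B0' \<oplus> B1' = be"
  unfolding B0'_def B1'_def by (rule half1[OF two]) simp_all

lemma t1: "a \<in> F \<Longrightarrow> b \<in> F \<Longrightarrow> a' \<in> F \<Longrightarrow> b' \<in> F \<Longrightarrow>
  P2 a b \<otimes> P2 a' b' = P2 (a * a' + b * b' * U) (a * b' + b * a')"
  unfolding P2_def by (simp add: N)

lemma t1': "a \<in> F \<Longrightarrow> b \<in> F \<Longrightarrow> a' \<in> F \<Longrightarrow> b' \<in> F \<Longrightarrow>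
  P3 a b \<otimes> P3 a' b' = P3 (a * a' + b * b' * U) (a * b' + b * a')"
  unfolding P3_def by (simp add: N)

lemma t4: "a \<in> F \<Longrightarrow> b \<in> F \<Longrightarrow> a' \<in> F \<Longrightarrow> b' \<in> F \<Longrightarrow>
  P2 a b \<oplus> P2 a' b' = P2 (a + a') (b + b')"
  unfolding P2_def by (simp add: N)

lemma t4': "a \<in> F \<Longrightarrow> b \<in> F \<Longrightarrow> a' \<in> F \<Longrightarrow> b' \<in> F \<Longrightarrow>
  P3 a b \<oplus> P3 a' b' = P3 (a + a') (b + b')"
  unfolding P3_def by (simp add: N)

lemma t6: "c \<in> F \<Longrightarrow> \<kappa> c \<otimes> P2 1 0 = P2 c 0"
  unfolding P2_def by (simp add: N)

lemma t6': "c \<in> F \<Longrightarrow> \<kappa> c \<otimes> P3 1 0 = P3 c 0"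
  unfolding P3_def by (simp add: N)

lemma t7: "e1 \<oplus> P2 1 0 \<oplus> P3 1 0 = \<one>"
  unfolding P2_def P3_def using sum1 by (simp add: \<kappa>one \<kappa>zero)

lemma P2_10: "P2 1 0 = e2" "P3 1 0 = e3" "P2 0 1 = s2" "P3 0 1 = s3"
  unfolding P2_def P3_def by (simp_all add: \<kappa>one \<kappa>zero)

lemma P_cr[simp]: "a \<in> F \<Longrightarrow> b \<in> F \<Longrightarrow> P2 a b \<in> carrier Q"
  "a \<in> F \<Longrightarrow> b \<in> F \<Longrightarrow> P3 a b \<in> carrier Q" "B0' \<in> carrier Q" "B1' \<in> carrier Q"
  unfolding P2_def P3_def B0'_def B1'_def by simp_all

lemma t11: "a \<in> F \<Longrightarrow> b \<in> F \<Longrightarrow> B0' \<otimes> P3 a b = P2 a b \<otimes> B0'"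
  unfolding P2_def P3_def B0'_def by (simp add: N)

lemma t12: "a \<in> F \<Longrightarrow> b \<in> F \<Longrightarrow> B1' \<otimes> P3 a b = P2 a (- b) \<otimes> B1'"
  unfolding P2_def P3_def B1'_def by (simp add: N)

end


locale LamQ' = alg Q F \<kappa> for Q :: "('c, 'm) ring_scheme" (structure) and F :: "'a::field set" and \<kappa> +
  fixes U V u :: 'a and \<theta> :: "'a \<Rightarrow> 'a" and E A B0 B1 G :: 'c and l2 l3 :: "'a \<Rightarrow> 'c"
  assumes UF[simp]: "U \<in> F" and VF[simp]: "V \<in> F" and UV: "U * V = 1" and Uu: "u * u = U"
  and thu: "\<theta> u = - u" and two: "(2::'a) \<noteq> 0"
  and cr[simp]: "E \<in> carrier Q" "A \<in> carrier Q" "B0 \<in> carrier Q" "B1 \<in> carrier Q" "G \<in> carrier Q"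
       "l2 z \<in> carrier Q" "l3 z \<in> carrier Q"
  and EE: "E \<otimes> E = E"
  and l2m: "l2 z \<otimes> l2 w = l2 (z * w)" and l3m: "l3 z \<otimes> l3 w = l3 (z * w)"
  and l2a: "l2 z \<oplus> l2 w = l2 (z + w)" and l3a: "l3 z \<oplus> l3 w = l3 (z + w)"
  and l2s: "c \<in> F \<Longrightarrow> \<kappa> c \<otimes> l2 1 = l2 c" and l3s: "c \<in> F \<Longrightarrow> \<kappa> c \<otimes> l3 1 = l3 c"
  and sum1: "E \<oplus> l2 1 \<oplus> l3 1 = \<one>"
  and orth: "E \<otimes> l2 z = \<zero>" "l2 z \<otimes> E = \<zero>" "E \<otimes> l3 z = \<zero>" "l3 z \<otimes> E = \<zero>"
     "l2 z \<otimes> l3 w = \<zero>" "l3 w \<otimes> l2 z = \<zero>"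
  and sand: "A = E \<otimes> A \<otimes> l2 1" "B0 = l2 1 \<otimes> B0 \<otimes> l3 1" "B1 = l2 1 \<otimes> B1 \<otimes> l3 1"
     "G = l3 1 \<otimes> G \<otimes> E"
  and comm: "B0 \<otimes> l3 z = l2 z \<otimes> B0" "B1 \<otimes> l3 z = l2 (\<theta> z) \<otimes> B1"
  and zr: "(B0 \<oplus> B1) \<otimes> G = \<zero>" "G \<otimes> A = \<zero>" "A \<otimes> (B0 \<oplus> B1) = \<zero>"
begin

lemma l2one: "l2 1 \<otimes> l2 z = l2 z" "l2 z \<otimes> l2 1 = l2 z" "l3 1 \<otimes> l3 z = l3 z" "l3 z \<otimes> l3 1 = l3 z"
  by (simp_all add: l2m l3m)

lemma sand1: "E \<otimes> A = A" "A \<otimes> l2 1 = A" "l2 1 \<otimes> B0 = B0" "B0 \<otimes> l3 1 = B0"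
  "l2 1 \<otimes> B1 = B1" "B1 \<otimes> l3 1 = B1" "l3 1 \<otimes> G = G" "G \<otimes> E = G"
  using sand_l[OF sand(1)] sand_r[OF sand(1)] sand_l[OF sand(2)] sand_r[OF sand(2)]
    sand_l[OF sand(3)] sand_r[OF sand(3)] sand_l[OF sand(4)] sand_r[OF sand(4)]
    EE l2one by simp_all

lemma coord_l2: "a \<in> F \<Longrightarrow> b \<in> F \<Longrightarrow> \<kappa> a \<otimes> l2 1 \<oplus> \<kappa> b \<otimes> l2 u = l2 (a + b * u)"
proof -
  assume a: "a \<in> F" and b: "b \<in> F"
  have "\<kappa> b \<otimes> l2 u = \<kappa> b \<otimes> (l2 1 \<otimes> l2 u)" by (simp add: l2one)
  also have "\<dots> = l2 b \<otimes> l2 u" using b by (simp add: m_assoc[symmetric] l2s)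
  also have "\<dots> = l2 (b * u)" by (simp add: l2m)
  finally show ?thesis using a by (simp add: l2s l2a)
qed

lemma coord_l3: "a \<in> F \<Longrightarrow> b \<in> F \<Longrightarrow> \<kappa> a \<otimes> l3 1 \<oplus> \<kappa> b \<otimes> l3 u = l3 (a + b * u)"
proof -
  assume a: "a \<in> F" and b: "b \<in> F"
  have "\<kappa> b \<otimes> l3 u = \<kappa> b \<otimes> (l3 1 \<otimes> l3 u)" by (simp add: l2one)
  also have "\<dots> = l3 b \<otimes> l3 u" using b by (simp add: m_assoc[symmetric] l3s)
  also have "\<dots> = l3 (b * u)" by (simp add: l3m)
  finally show ?thesis using a by (simp add: l3s l3a)
qed

lemma uBu0: "l2 u \<otimes> B0 \<otimes> l3 u = \<kappa> U \<otimes> B0"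
proof -
  have "l2 u \<otimes> B0 \<otimes> l3 u = l2 u \<otimes> (l2 u \<otimes> B0)" by (simp add: m_assoc comm)
  also have "\<dots> = l2 U \<otimes> B0" by (simp add: m_assoc[symmetric] l2m Uu)
  also have "\<dots> = (\<kappa> U \<otimes> l2 1) \<otimes> B0" by (simp add: l2s)
  also have "\<dots> = \<kappa> U \<otimes> B0" by (simp add: m_assoc sand1)
  finally show ?thesis .
qed

lemma uBu1: "l2 u \<otimes> B1 \<otimes> l3 u = \<ominus> (\<kappa> U \<otimes> B1)"
proof -
  have "l2 u \<otimes> B1 \<otimes> l3 u = l2 u \<otimes> (l2 (- u) \<otimes> B1)" by (simp add: m_assoc comm thu)
  also have "\<dots> = l2 (- U) \<otimes> B1" by (simp add: m_assoc[symmetric] l2m Uu[symmetric])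
  also have "\<dots> = (\<kappa> (- U) \<otimes> l2 1) \<otimes> B1" by (simp add: l2s)
  also have "\<dots> = \<kappa> (- U) \<otimes> B1" by (simp add: m_assoc sand1)
  also have "\<dots> = \<ominus> (\<kappa> U \<otimes> B1)" by (simp add: sc_neg)
  finally show ?thesis .
qed

lemma inv_b0: "\<kappa> (1/2) \<otimes> ((B0 \<oplus> B1) \<oplus> \<kappa> V \<otimes> (l2 u \<otimes> (B0 \<oplus> B1) \<otimes> l3 u)) = B0"
proof -
  have "\<kappa> V \<otimes> (l2 u \<otimes> (B0 \<oplus> B1) \<otimes> l3 u) = B0 \<ominus> B1"
    by (simp add: r_distr l_distr uBu0 uBu1 sc_l r_minus minus_eq UV mult.commute[of V] \<kappa>one)
  then show ?thesis using half1[OF two, of B0 B1] by (simp add: r_distr)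
qed

lemma inv_b1: "\<kappa> (1/2) \<otimes> ((B0 \<oplus> B1) \<ominus> \<kappa> V \<otimes> (l2 u \<otimes> (B0 \<oplus> B1) \<otimes> l3 u)) = B1"
proof -
  have "\<kappa> V \<otimes> (l2 u \<otimes> (B0 \<oplus> B1) \<otimes> l3 u) = B0 \<ominus> B1"
    by (simp add: r_distr l_distr uBu0 uBu1 sc_l r_minus minus_eq UV mult.commute[of V] \<kappa>one)
  then show ?thesis using half2[OF two, of B0 B1] by simp
qed

end


lemma (in ring) minus_zero_eq: "x \<ominus> y = \<zero> \<Longrightarrow> x \<in> carrier R \<Longrightarrow> y \<in> carrier R \<Longrightarrow> x = y"
  by (metis a_minus_def add.inv_closed add.inv_equality minus_minus)

lemma (in ring) eq_minus_zero: "x = y \<Longrightarrow> y \<in> carrier R \<Longrightarrow> x \<ominus> y = \<zero>"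
  by (simp add: r_neg minus_eq)

lemma quot_push:
  fixes F :: "'a::field set" and I :: "('g list \<Rightarrow> 'a) set"
  assumes sf: "is_subfield F" and I: "ideal I (free_alg F)"
  shows "push F (free_alg F Quot I) ((+>\<^bsub>free_alg F\<^esub>) I)"
  by (rule push.intro[OF sf ideal.quotient_is_ring[OF I] ideal.rcos_ring_hom[OF I]])

lemma quot_push_subst:
  fixes F :: "'a::field set" and J :: "('h list \<Rightarrow> 'a) set" and \<phi> :: "'g \<Rightarrow> 'h list \<Rightarrow> 'a"
  assumes sf: "is_subfield F" and J: "ideal J (free_alg F)" and \<phi>: "\<And>x. \<phi> x \<in> falg_carrier F"
  shows "push F (free_alg F Quot J) ((+>\<^bsub>free_alg F\<^esub>) J \<circ> subst \<phi>)"
proof (rule push.intro[OF sf ideal.quotient_is_ring[OF J]])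
  show "(+>\<^bsub>free_alg F\<^esub>) J \<circ> subst \<phi> \<in> ring_hom (free_alg F) (free_alg F Quot J)"
    by (rule ring_hom_trans[OF subst_hom[OF sf] ideal.rcos_ring_hom[OF J]]) (use \<phi> in simp)
qed

lemma quot_alg:
  fixes F :: "'a::field set" and I :: "('g list \<Rightarrow> 'a) set"
  assumes sf: "is_subfield F" and I: "ideal I (free_alg F)"
  shows "alg (free_alg F Quot I) F (\<lambda>c. I +>\<^bsub>free_alg F\<^esub> fscal c)"
proof -
  interpret P: push F "free_alg F Quot I" "(+>\<^bsub>free_alg F\<^esub>) I" by (rule quot_push[OF sf I])
  interpret Q: ring "free_alg F Quot I" by (rule ideal.quotient_is_ring[OF I])
  show ?thesis
  proof (unfold_locales)
    show "is_subfield F" by (rule sf)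
    fix c assume c: "c \<in> F"
    show "I +>\<^bsub>free_alg F\<^esub> fscal c \<in> carrier (free_alg F Quot I)" using P.hc[of "fscal c"] c by simp
  next
    fix a b assume a: "a \<in> F" and b: "b \<in> F"
    have "(fscal (a + b) :: 'g list \<Rightarrow> 'a) = fscal a [+] fscal b" by (auto simp: fscal_def fadd_def fun_eq_iff)
    then show "I +>\<^bsub>free_alg F\<^esub> fscal (a + b) = (I +>\<^bsub>free_alg F\<^esub> fscal a) \<oplus>\<^bsub>free_alg F Quot I\<^esub> (I +>\<^bsub>free_alg F\<^esub> fscal b)"
      using P.ha[of "fscal a" "fscal b"] a b by simp
    have "(fscal (a * b) :: 'g list \<Rightarrow> 'a) = fscal a [*] fscal b" by (simp only: fscal_fmul) (simp add: fscal_def fsmul_def fun_eq_iff)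
    then show "I +>\<^bsub>free_alg F\<^esub> fscal (a * b) = (I +>\<^bsub>free_alg F\<^esub> fscal a) \<otimes>\<^bsub>free_alg F Quot I\<^esub> (I +>\<^bsub>free_alg F\<^esub> fscal b)"
      using P.hm[of "fscal a" "fscal b"] a b by simp
  next
    show "I +>\<^bsub>free_alg F\<^esub> fscal 1 = \<one>\<^bsub>free_alg F Quot I\<^esub>" by (simp add: FactRing_def)
  next
    fix c x assume c: "c \<in> F" and x: "x \<in> carrier (free_alg F Quot I)"
    then obtain p where p: "p \<in> falg_carrier F" and xp: "x = I +>\<^bsub>free_alg F\<^esub> p"
      by (auto simp: FactRing_def A_RCOSETS_def')
    have "fscal c [*] p = p [*] fscal c" by (simp add: fscal_fmul fmul_fscal)
    then show "(I +>\<^bsub>free_alg F\<^esub> fscal c) \<otimes>\<^bsub>free_alg F Quot I\<^esub> x = x \<otimes>\<^bsub>free_alg F Quot I\<^esub> (I +>\<^bsub>free_alg F\<^esub> fscal c)"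
      using P.hm[of "fscal c" p] P.hm[of p "fscal c"] c p xp by simp
  qed
qed

lemma genideal_rel:
  fixes F :: "'a::field set" and S :: "('g list \<Rightarrow> 'a) set"
  assumes sf: "is_subfield F" and Sc: "S \<subseteq> falg_carrier F" and r: "r \<in> S"
  shows "genideal (free_alg F) S +>\<^bsub>free_alg F\<^esub> r = \<zero>\<^bsub>free_alg F Quot genideal (free_alg F) S\<^esub>"
proof -
  interpret R: ring "free_alg F :: ('g list \<Rightarrow> 'a) ring" by (rule free_ring[OF sf])
  have I: "ideal (genideal (free_alg F) S) (free_alg F)" by (rule R.genideal_ideal) (use Sc in simp)
  have "r \<in> genideal (free_alg F) S" using R.genideal_self[of S] Sc r by auto
  then show ?thesis
  proof -
    interpret Iid: ideal "genideal (free_alg F) S" "free_alg F" by (rule I)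
    assume "r \<in> genideal (free_alg F) S"
    then show ?thesis using Iid.a_rcos_const by (simp add: FactRing_def)
  qed
qed

lemma genideal_ideal':
  fixes F :: "'a::field set" and S :: "('g list \<Rightarrow> 'a) set"
  assumes sf: "is_subfield F" and Sc: "S \<subseteq> falg_carrier F"
  shows "ideal (genideal (free_alg F) S) (free_alg F)"
proof -
  interpret R: ring "free_alg F :: ('g list \<Rightarrow> 'a) ring" by (rule free_ring[OF sf])
  show ?thesis by (rule R.genideal_ideal) (use Sc in simp)
qed

lemma zero_coset_mem:
  fixes F :: "'a::field set" and J :: "('g list \<Rightarrow> 'a) set"
  assumes sf: "is_subfield F" and J: "ideal J (free_alg F)" and p: "p \<in> falg_carrier F"
    and e: "J +>\<^bsub>free_alg F\<^esub> p = \<zero>\<^bsub>free_alg F Quot J\<^esub>"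
  shows "p \<in> J"
  by (rule rcos_eq_zero[OF J]) (use p e in \<open>simp_all add: FactRing_def\<close>)


definition coa :: "'a::field set \<Rightarrow> 'a \<Rightarrow> 'a \<Rightarrow> 'a" where
  "coa F u z = fst (SOME p. fst p \<in> F \<and> snd p \<in> F \<and> z = fst p + snd p * u)"
definition cob :: "'a::field set \<Rightarrow> 'a \<Rightarrow> 'a \<Rightarrow> 'a" where
  "cob F u z = snd (SOME p. fst p \<in> F \<and> snd p \<in> F \<and> z = fst p + snd p * u)"

context
  fixes F :: "'a::field set" and \<theta> :: "'a \<Rightarrow> 'a" and u :: 'a
  assumes d: "deg2_datum F \<theta> u"
begin

lemma d_sf: "is_subfield F" using d by (simp add: deg2_datum_def)
lemma d_two: "(2::'a) \<noteq> 0" using d by (simp add: deg2_datum_def)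
lemma d_u0: "u \<noteq> 0" using d by (simp add: deg2_datum_def)
lemma d_thu: "\<theta> u = - u" using d by (simp add: deg2_datum_def)
lemma d_add: "\<theta> (x + y) = \<theta> x + \<theta> y" using d by (simp add: deg2_datum_def galois_elt_def)
lemma d_mult: "\<theta> (x * y) = \<theta> x * \<theta> y" using d by (simp add: deg2_datum_def galois_elt_def)
lemma d_fix: "c \<in> F \<Longrightarrow> \<theta> c = c" using d by (simp add: deg2_datum_def galois_elt_def)

lemma neg_self: "(x::'a) = - x \<Longrightarrow> x = 0"
proof -
  assume m: "x = - x"
  have "2 * x = x + x" by (rule mult_2)
  also have "\<dots> = x + - x" using m by (rule arg_cong)
  also have "\<dots> = 0" by (rule add.right_inverse)
  finally have "2 * x = 0" .
  then show "x = 0" using d_two by simp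
qed

lemma u_notin: "u \<notin> F"
proof
  assume uF: "u \<in> F"
  have t: "\<theta> u = u" using uF by (rule d_fix)
  have m: "- u = u"
  proof -
    have "- u = \<theta> u" by (rule d_thu[symmetric])
    also have "\<dots> = u" by (rule t)
    finally show ?thesis .
  qed
  have "2 * u = u + u" by (rule mult_2)
  also have "\<dots> = u + - u" using m by (rule arg_cong[symmetric])
  also have "\<dots> = 0" by (rule add.right_inverse)
  finally have "2 * u = 0" .
  then show False using d_two d_u0 by simp
qed

lemma span: "\<exists>a b. a \<in> F \<and> b \<in> F \<and> z = a + b * u"
proof -
  note S = subf_simps[OF d_sf]
  have dt: "degree_two F" using d by (simp add: deg2_datum_def)
  obtain b1 b2 where H: "\<forall>x. \<exists>!cd. cd \<in> F \<times> F \<and> x = fst cd * b1 + snd cd * b2"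
    using dt unfolding degree_two_def by (elim exE) (erule that)
  have ex: "\<exists>c d. c \<in> F \<and> d \<in> F \<and> x = c * b1 + d * b2" for x
  proof -
    obtain cd where "cd \<in> F \<times> F \<and> x = fst cd * b1 + snd cd * b2"
      using ex1_implies_ex[OF spec[OF H, of x]] by (elim exE) (erule that)
    then show ?thesis by (intro exI[of _ "fst cd"] exI[of _ "snd cd"]) (simp add: mem_Times_iff)
  qed
  obtain a1 a2 where a0: "a1 \<in> F" "a2 \<in> F" "1 = a1 * b1 + a2 * b2" using ex[of 1] by (elim exE conjE) (rule that; assumption)
  have a: "a1 \<in> F" "a2 \<in> F" "a1 * b1 + a2 * b2 = 1" using a0 by simp_all
  obtain c1 c2 where c: "c1 \<in> F" "c2 \<in> F" "u = c1 * b1 + c2 * b2" using ex[of u] by (elim exE conjE) (rule that; assumption)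
  define D where "D = a1 * c2 - a2 * c1"
  show ?thesis
  proof (cases "D = 0")
    case False
    obtain x1 x2 where x: "x1 \<in> F" "x2 \<in> F" "z = x1 * b1 + x2 * b2" using ex[of z] by (elim exE conjE) (rule that; assumption)
    define A where "A = (x1 * c2 - x2 * c1) / D"
    define B where "B = (x2 * a1 - x1 * a2) / D"
    have e1: "A * a1 + B * c1 = x1"
    proof -
      have "A * a1 + B * c1 = (x1 * (a1 * c2 - a2 * c1)) / D"
        unfolding A_def B_def by (simp add: add_divide_distrib[symmetric] algebra_simps)
      then show ?thesis using False unfolding D_def by simp
    qed
    have e2: "A * a2 + B * c2 = x2"
    proof -
      have "A * a2 + B * c2 = (x2 * (a1 * c2 - a2 * c1)) / D"
        unfolding A_def B_def by (simp add: add_divide_distrib[symmetric] algebra_simps)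
      then show ?thesis using False unfolding D_def by simp
    qed
    have "A + B * u = A * (a1 * b1 + a2 * b2) + B * (c1 * b1 + c2 * b2)"
      by (simp only: a(3) c(3)[symmetric] mult_1_right)
    also have "\<dots> = (A * a1 + B * c1) * b1 + (A * a2 + B * c2) * b2"
      by (simp only: algebra_simps)
    also have "\<dots> = z" by (simp only: e1 e2 x(3))
    finally have "z = A + B * u" by (rule sym)
    moreover have "A \<in> F" "B \<in> F" unfolding A_def B_def D_def using a c x S by auto
    ultimately show ?thesis by blast
  next
    case True
    have "u \<in> F"
    proof (cases "a1 = 0")
      case False
      have c2: "c2 = c1 * a2 / a1" using True False unfolding D_def by (simp add: field_simps)
      have "(c1 / a1) * (a1 * b1 + a2 * b2) = c1 * b1 + c2 * b2"
        using False by (simp add: c2 field_simps)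
      then have "u = (c1 / a1) * 1" by (simp only: a(3) c(3)[symmetric])
      then have "u = c1 / a1" by (simp only: mult_1_right)
      then show ?thesis using S(8)[OF c(1) a(1)] by (simp only:)
    next
      case z: True
      have e: "a2 * b2 = 1" using a(3) z by simp
      have a2: "a2 \<noteq> 0"
      proof
        assume "a2 = 0"
        then show False using e by simp
      qed
      then have c10: "c1 = 0" using True z unfolding D_def by simp
      have "(c2 / a2) * (a2 * b2) = c1 * b1 + c2 * b2" using a2 c10 by simp
      then have "u = (c2 / a2) * 1" by (simp only: e c(3)[symmetric])
      then have "u = c2 / a2" by (simp only: mult_1_right)
      then show ?thesis using S(8)[OF c(2) a(2)] by (simp only:)
    qed
    then show ?thesis using u_notin by simp
  qed
qed

lemma unique: "a \<in> F \<Longrightarrow> b \<in> F \<Longrightarrow> a' \<in> F \<Longrightarrow> b' \<in> F \<Longrightarrow> a + b * u = a' + b' * u \<Longrightarrow> a = a' \<and> b = b'"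
proof -
  assume h: "a \<in> F" "b \<in> F" "a' \<in> F" "b' \<in> F" "a + b * u = a' + b' * u"
  note S = subf_simps[OF d_sf]
  show ?thesis
  proof (cases "b = b'")
    case True then show ?thesis using h by simp
  next
    case False
    have "(b - b') * u = a' - a" using h(5) by (simp add: algebra_simps) 
    then have "u = (a' - a) / (b - b')" using False by (simp add: field_simps)
    then have "u \<in> F" using S h by simp
    then show ?thesis using u_notin by simp
  qed
qed

lemma theta_coord: "a \<in> F \<Longrightarrow> b \<in> F \<Longrightarrow> \<theta> (a + b * u) = a + (- b) * u"
  using d_add d_mult d_fix d_thu by simp

lemma uu: "u * u \<in> F"
proof -
  note S = subf_simps[OF d_sf]
  obtain a b where ab: "a \<in> F" "b \<in> F" "u * u = a + b * u" using span by blast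
  have "\<theta> (u * u) = u * u" using d_mult d_thu by simp
  then have "a + (- b) * u = a + b * u" using theta_coord[OF ab(1,2)] ab(3) by simp
  then have "- b = b" using unique[of a "-b" a b] ab S by simp
  then have "b = 0" using neg_self by metis
  then show ?thesis using ab by simp
qed

lemma co_spec: "coa F u z \<in> F \<and> cob F u z \<in> F \<and> z = coa F u z + cob F u z * u"
proof -
  obtain a b where "a \<in> F \<and> b \<in> F \<and> z = a + b * u" using span by blast
  then have "\<exists>p. fst p \<in> F \<and> snd p \<in> F \<and> z = fst p + snd p * u" by (intro exI[of _ "(a, b)"]) simp
  then show ?thesis unfolding coa_def cob_def by (rule someI_ex)
qed

lemma coF[simp]: "coa F u z \<in> F" "cob F u z \<in> F" using co_spec by auto
lemma co_dec: "coa F u z + cob F u z * u = z" using co_spec by auto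

lemma co_eq: "a \<in> F \<Longrightarrow> b \<in> F \<Longrightarrow> coa F u (a + b * u) = a \<and> cob F u (a + b * u) = b"
  using unique[of "coa F u (a + b * u)" "cob F u (a + b * u)" a b] co_spec[of "a + b * u"] by auto

lemma co_F: "c \<in> F \<Longrightarrow> coa F u c = c \<and> cob F u c = 0"
  using co_eq[of c 0] subf_simps(1)[OF d_sf] by simp

lemma co_1: "coa F u 1 = 1" "cob F u 1 = 0" using co_F[OF subf_simps(2)[OF d_sf]] by auto
lemma co_u: "coa F u u = 0" "cob F u u = 1"
  using co_eq[of 0 1] subf_simps(1,2)[OF d_sf] by auto

lemma co_add: "coa F u (z + w) = coa F u z + coa F u w" "cob F u (z + w) = cob F u z + cob F u w"
proof -
  note S = subf_simps[OF d_sf]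
  have "z + w = (coa F u z + coa F u w) + (cob F u z + cob F u w) * u"
    using co_dec[of z] co_dec[of w] by (simp add: algebra_simps)
  then show "coa F u (z + w) = coa F u z + coa F u w" "cob F u (z + w) = cob F u z + cob F u w"
    using co_eq[of "coa F u z + coa F u w" "cob F u z + cob F u w"] S by auto
qed

lemma co_mult: "coa F u (z * w) = coa F u z * coa F u w + cob F u z * cob F u w * (u * u)"
  "cob F u (z * w) = coa F u z * cob F u w + cob F u z * coa F u w"
proof -
  note S = subf_simps[OF d_sf]
  have "z * w = (coa F u z * coa F u w + cob F u z * cob F u w * (u * u))
              + (coa F u z * cob F u w + cob F u z * coa F u w) * u"
  proof -
    have "z * w = (coa F u z + cob F u z * u) * (coa F u w + cob F u w * u)"
      using co_dec[of z] co_dec[of w] by simp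
    then show ?thesis by (simp add: algebra_simps)
  qed
  then show "coa F u (z * w) = coa F u z * coa F u w + cob F u z * cob F u w * (u * u)"
     "cob F u (z * w) = coa F u z * cob F u w + cob F u z * coa F u w"
    using co_eq[of "coa F u z * coa F u w + cob F u z * cob F u w * (u * u)"
        "coa F u z * cob F u w + cob F u z * coa F u w"] S uu by auto
qed

lemma co_theta: "coa F u (\<theta> z) = coa F u z" "cob F u (\<theta> z) = - cob F u z"
proof -
  note S = subf_simps[OF d_sf]
  have "\<theta> z = coa F u z + (- cob F u z) * u"
    using theta_coord[of "coa F u z" "cob F u z"] co_dec[of z] by simp
  then show "coa F u (\<theta> z) = coa F u z" "cob F u (\<theta> z) = - cob F u z"
    using co_eq[of "coa F u z" "- cob F u z"] S by auto
qed

lemma inv_u: "inverse u = inverse (u * u) * u"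
  using d_u0 by (simp add: field_simps)

lemma co_invu: "coa F u (inverse u) = 0" "cob F u (inverse u) = inverse (u * u)"
proof -
  note S = subf_simps[OF d_sf]
  have e: "inverse u = 0 + inverse (u * u) * u" using inv_u by simp
  have k: "inverse (u * u) \<in> F" using S(6)[OF uu] .
  have "coa F u (0 + inverse (u * u) * u) = 0 \<and> cob F u (0 + inverse (u * u) * u) = inverse (u * u)"
    by (rule co_eq[OF S(1) k])
  then show "coa F u (inverse u) = 0" "cob F u (inverse u) = inverse (u * u)"
    by (simp_all only: e[symmetric])
qed

end


theorem proposition4p3:
  fixes F :: "'a::field set" and \<theta> :: "'a \<Rightarrow> 'a" and u :: 'a
  assumes "deg2_datum F \<theta> u"
  shows "F_alg_iso F (Lambda'_rels F \<theta> u) (Lambda_rels u :: (qgen list \<Rightarrow> 'a) set)"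
proof -
  note d = assms
  have sf: "is_subfield F" by (rule d_sf[OF d])
  note S = subf_simps[OF sf]
  have two: "(2::'a) \<noteq> 0" by (rule d_two[OF d])
  have u0: "u \<noteq> 0" by (rule d_u0[OF d])
  define U where "U = u * u"
  define V where "V = inverse U"
  have UF: "U \<in> F" unfolding U_def by (rule uu[OF d])
  have VF: "V \<in> F" unfolding V_def using S(6)[OF UF] .
  have UV: "U * V = 1" unfolding V_def by (rule right_inverse) (use u0 in \<open>simp add: U_def\<close>)
  define ca where "ca = coa F u"
  define cb where "cb = cob F u"
  have caF[simp]: "ca z \<in> F" "cb z \<in> F" for z unfolding ca_def cb_def using coF[OF d] by auto
  define \<phi> :: "'a sgen \<Rightarrow> qgen list \<Rightarrow> 'a" where "\<phi> = (\<lambda>x. case x of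
      E1 \<Rightarrow> fgen V1
    | L2 z \<Rightarrow> fsmul (ca z) (fgen V2) [+] fsmul (cb z) (fgen QS2)
    | L3 z \<Rightarrow> fsmul (ca z) (fgen V3) [+] fsmul (cb z) (fgen QS3)
    | SAlpha \<Rightarrow> fgen QAlpha
    | SBeta0 \<Rightarrow> fsmul (1/2) (fgen QBeta [+] fsmul V (fgen QS2 [*] fgen QBeta [*] fgen QS3))
    | SBeta1 \<Rightarrow> fsmul (1/2) (fgen QBeta [-] fsmul V (fgen QS2 [*] fgen QBeta [*] fgen QS3))
    | SGamma \<Rightarrow> fgen QGamma)"
  define \<psi> :: "qgen \<Rightarrow> 'a sgen list \<Rightarrow> 'a" where "\<psi> = (\<lambda>y. case y of
      V1 \<Rightarrow> fgen E1 | V2 \<Rightarrow> fgen (L2 1) | V3 \<Rightarrow> fgen (L3 1)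
    | QAlpha \<Rightarrow> fgen SAlpha | QBeta \<Rightarrow> fgen SBeta0 [+] fgen SBeta1 | QGamma \<Rightarrow> fgen SGamma
    | QS2 \<Rightarrow> fgen (L2 u) | QS3 \<Rightarrow> fgen (L3 u))"
  have half: "1/2 \<in> F" using S(8)[OF S(2) S(3)[OF S(2) S(2)]] by simp
  note clq = push.cl[OF quot_push[OF sf genideal_ideal'[OF sf, of "{}"]]]
  have \<phi>c: "\<phi> x \<in> falg_carrier F" for x
    unfolding \<phi>_def by (cases x) (simp_all add: clq VF half)
  have \<psi>c: "\<psi> y \<in> falg_carrier F" for y
    unfolding \<psi>_def by (cases y) (simp_all add: clq)
  have Tc: "Lambda_rels u \<subseteq> falg_carrier F"
    unfolding Lambda_rels_def pathalg_rels_def using UF by (auto simp: clq U_def S(1,2))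
  have Sc: "Lambda'_rels F \<theta> u \<subseteq> falg_carrier F"
    unfolding Lambda'_rels_def TR_rels_def using half by (auto simp: clq S(1,2))
  have qv: "qvert 1 = V1" "qvert 2 = V2" "qvert 3 = V3" by (simp_all add: eval_nat_numeral)
  define J where "J = genideal (free_alg F) (Lambda_rels u :: (qgen list \<Rightarrow> 'a) set)"
  have Jid: "ideal J (free_alg F)" unfolding J_def by (rule genideal_ideal'[OF sf Tc])
  define Q2 where "Q2 = (free_alg F :: (qgen list \<Rightarrow> 'a) ring) Quot J"
  define \<pi>2 where "\<pi>2 = (+>\<^bsub>(free_alg F :: (qgen list \<Rightarrow> 'a) ring)\<^esub>) J"
  define \<kappa>2 where "\<kappa>2 = (\<lambda>c. \<pi>2 (fscal c))"
  interpret P2: push F Q2 \<pi>2 unfolding Q2_def \<pi>2_def by (rule quot_push[OF sf Jid])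
  interpret A2: alg Q2 F \<kappa>2 unfolding Q2_def \<kappa>2_def \<pi>2_def by (rule quot_alg[OF sf Jid])
  have relJ: "\<pi>2 r = \<zero>\<^bsub>Q2\<^esub>" if "r \<in> Lambda_rels u" for r
    unfolding \<pi>2_def Q2_def J_def by (rule genideal_rel[OF sf Tc that])
  define e1 where "e1 = \<pi>2 (fgen V1)"
  define e2 where "e2 = \<pi>2 (fgen V2)"
  define e3 where "e3 = \<pi>2 (fgen V3)"
  define al where "al = \<pi>2 (fgen QAlpha)"
  define be where "be = \<pi>2 (fgen QBeta)"
  define ga where "ga = \<pi>2 (fgen QGamma)"
  define s2 where "s2 = \<pi>2 (fgen QS2)"
  define s3 where "s3 = \<pi>2 (fgen QS3)"
  have k2app: "\<pi>2 (fscal c) = \<kappa>2 c" for c by (simp add: \<kappa>2_def)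
  note gdefs2 = k2app e1_def[symmetric] e2_def[symmetric] e3_def[symmetric] al_def[symmetric]
    be_def[symmetric] ga_def[symmetric] s2_def[symmetric] s3_def[symmetric]
  have cr2: "e1 \<in> carrier Q2" "e2 \<in> carrier Q2" "e3 \<in> carrier Q2" "al \<in> carrier Q2"
       "be \<in> carrier Q2" "ga \<in> carrier Q2" "s2 \<in> carrier Q2" "s3 \<in> carrier Q2"
    unfolding e1_def e2_def e3_def al_def be_def ga_def s2_def s3_def by (simp_all add: P2.hc clq)
  have pv: "\<pi>2 (fgen (qvert i) [*] fgen (qvert j) [-] (if i = j then fgen (qvert i) else (\<lambda>w. 0))) = \<zero>\<^bsub>Q2\<^esub>"
    if "i \<in> {1,2,3}" "j \<in> {1,2,3}" for i j :: nat
    by (rule relJ) (unfold Lambda_rels_def pathalg_rels_def, use that in blast)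
  have rl2: "\<pi>2 r = \<zero>\<^bsub>Q2\<^esub>" if "r \<in> {fgen V1 [+] fgen V2 [+] fgen V3 [-] fscal 1,
      fgen QAlpha [-] fgen V1 [*] fgen QAlpha [*] fgen V2,
      fgen QBeta [-] fgen V2 [*] fgen QBeta [*] fgen V3,
      fgen QGamma [-] fgen V3 [*] fgen QGamma [*] fgen V1,
      fgen QS2 [-] fgen V2 [*] fgen QS2 [*] fgen V2,
      fgen QS3 [-] fgen V3 [*] fgen QS3 [*] fgen V3,
      fgen QAlpha [*] fgen QBeta, fgen QBeta [*] fgen QGamma, fgen QGamma [*] fgen QAlpha,
      fgen QS2 [*] fgen QS2 [-] fsmul (u * u) (fgen V2),
      fgen QS3 [*] fgen QS3 [-] fsmul (u * u) (fgen V3)}" for r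
    by (rule relJ) (use that in \<open>unfold Lambda_rels_def pathalg_rels_def, blast\<close>)
  note ps2 = P2.push_simps clq S(1,2) UF[unfolded U_def]
  have LQ: "LamQ Q2 F \<kappa>2 U V e1 e2 e3 al be ga s2 s3"
  proof (rule LamQ.intro[OF A2.alg_axioms], unfold_locales)
    show "U \<in> F" "V \<in> F" "U * V = 1" by (rule UF, rule VF, rule UV)
    show "e1 \<in> carrier Q2" "e2 \<in> carrier Q2" "e3 \<in> carrier Q2" "al \<in> carrier Q2"
       "be \<in> carrier Q2" "ga \<in> carrier Q2" "s2 \<in> carrier Q2" "s3 \<in> carrier Q2" by (rule cr2)+
    show "(2::'a) \<noteq> 0" by (rule two)
    show "e1 \<otimes>\<^bsub>Q2\<^esub> e1 = e1" using pv[of 1 1] cr2 by (simp add: qv ps2 gdefs2 A2.minus_zero_eq)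
    show "e2 \<otimes>\<^bsub>Q2\<^esub> e2 = e2" using pv[of 2 2] cr2 by (simp add: qv ps2 gdefs2 A2.minus_zero_eq)
    show "e3 \<otimes>\<^bsub>Q2\<^esub> e3 = e3" using pv[of 3 3] cr2 by (simp add: qv ps2 gdefs2 A2.minus_zero_eq)
    show "e1 \<otimes>\<^bsub>Q2\<^esub> e2 = \<zero>\<^bsub>Q2\<^esub>" using pv[of 1 2] cr2 by (simp add: qv ps2 gdefs2 A2.minus_eq A2.minus_zero)
    show "e1 \<otimes>\<^bsub>Q2\<^esub> e3 = \<zero>\<^bsub>Q2\<^esub>" using pv[of 1 3] cr2 by (simp add: qv ps2 gdefs2 A2.minus_eq A2.minus_zero)
    show "e2 \<otimes>\<^bsub>Q2\<^esub> e1 = \<zero>\<^bsub>Q2\<^esub>" using pv[of 2 1] cr2 by (simp add: qv ps2 gdefs2 A2.minus_eq A2.minus_zero)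
    show "e2 \<otimes>\<^bsub>Q2\<^esub> e3 = \<zero>\<^bsub>Q2\<^esub>" using pv[of 2 3] cr2 by (simp add: qv ps2 gdefs2 A2.minus_eq A2.minus_zero)
    show "e3 \<otimes>\<^bsub>Q2\<^esub> e1 = \<zero>\<^bsub>Q2\<^esub>" using pv[of 3 1] cr2 by (simp add: qv ps2 gdefs2 A2.minus_eq A2.minus_zero)
    show "e3 \<otimes>\<^bsub>Q2\<^esub> e2 = \<zero>\<^bsub>Q2\<^esub>" using pv[of 3 2] cr2 by (simp add: qv ps2 gdefs2 A2.minus_eq A2.minus_zero)
    show "e1 \<oplus>\<^bsub>Q2\<^esub> e2 \<oplus>\<^bsub>Q2\<^esub> e3 = \<one>\<^bsub>Q2\<^esub>"
      using rl2[of "fgen V1 [+] fgen V2 [+] fgen V3 [-] fscal 1"] cr2 A2.\<kappa>one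
      by (simp add: ps2 gdefs2 A2.minus_zero_eq)
    show "al = e1 \<otimes>\<^bsub>Q2\<^esub> al \<otimes>\<^bsub>Q2\<^esub> e2"
      using rl2[of "fgen QAlpha [-] fgen V1 [*] fgen QAlpha [*] fgen V2"] cr2
      by (simp add: ps2 gdefs2 A2.minus_zero_eq)
    show "be = e2 \<otimes>\<^bsub>Q2\<^esub> be \<otimes>\<^bsub>Q2\<^esub> e3"
      using rl2[of "fgen QBeta [-] fgen V2 [*] fgen QBeta [*] fgen V3"] cr2
      by (simp add: ps2 gdefs2 A2.minus_zero_eq)
    show "ga = e3 \<otimes>\<^bsub>Q2\<^esub> ga \<otimes>\<^bsub>Q2\<^esub> e1"
      using rl2[of "fgen QGamma [-] fgen V3 [*] fgen QGamma [*] fgen V1"] cr2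
      by (simp add: ps2 gdefs2 A2.minus_zero_eq)
    show "s2 = e2 \<otimes>\<^bsub>Q2\<^esub> s2 \<otimes>\<^bsub>Q2\<^esub> e2"
      using rl2[of "fgen QS2 [-] fgen V2 [*] fgen QS2 [*] fgen V2"] cr2
      by (simp add: ps2 gdefs2 A2.minus_zero_eq)
    show "s3 = e3 \<otimes>\<^bsub>Q2\<^esub> s3 \<otimes>\<^bsub>Q2\<^esub> e3"
      using rl2[of "fgen QS3 [-] fgen V3 [*] fgen QS3 [*] fgen V3"] cr2
      by (simp add: ps2 gdefs2 A2.minus_zero_eq)
    show "al \<otimes>\<^bsub>Q2\<^esub> be = \<zero>\<^bsub>Q2\<^esub>" using rl2[of "fgen QAlpha [*] fgen QBeta"] by (simp add: ps2 gdefs2)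
    show "be \<otimes>\<^bsub>Q2\<^esub> ga = \<zero>\<^bsub>Q2\<^esub>" using rl2[of "fgen QBeta [*] fgen QGamma"] by (simp add: ps2 gdefs2)
    show "ga \<otimes>\<^bsub>Q2\<^esub> al = \<zero>\<^bsub>Q2\<^esub>" using rl2[of "fgen QGamma [*] fgen QAlpha"] by (simp add: ps2 gdefs2)
    show "s2 \<otimes>\<^bsub>Q2\<^esub> s2 = \<kappa>2 U \<otimes>\<^bsub>Q2\<^esub> e2"
      using rl2[of "fgen QS2 [*] fgen QS2 [-] fsmul (u * u) (fgen V2)"] cr2 UF
      by (simp add: ps2 gdefs2 A2.minus_zero_eq U_def)
    show "s3 \<otimes>\<^bsub>Q2\<^esub> s3 = \<kappa>2 U \<otimes>\<^bsub>Q2\<^esub> e3"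
      using rl2[of "fgen QS3 [*] fgen QS3 [-] fsmul (u * u) (fgen V3)"] cr2 UF
      by (simp add: ps2 gdefs2 A2.minus_zero_eq U_def)
  qed
  interpret LQ: LamQ Q2 F \<kappa>2 U V e1 e2 e3 al be ga s2 s3 by (rule LQ)
  define I where "I = genideal (free_alg F) (Lambda'_rels F \<theta> u)"
  have Iid: "ideal I (free_alg F)" unfolding I_def by (rule genideal_ideal'[OF sf Sc])
  define Q1 where "Q1 = (free_alg F :: ('a sgen list \<Rightarrow> 'a) ring) Quot I"
  define \<pi>1 where "\<pi>1 = (+>\<^bsub>(free_alg F :: ('a sgen list \<Rightarrow> 'a) ring)\<^esub>) I"
  define \<kappa>1 where "\<kappa>1 = (\<lambda>c. \<pi>1 (fscal c))"
  interpret P1: push F Q1 \<pi>1 unfolding Q1_def \<pi>1_def by (rule quot_push[OF sf Iid])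
  interpret A1: alg Q1 F \<kappa>1 unfolding Q1_def \<kappa>1_def \<pi>1_def by (rule quot_alg[OF sf Iid])
  have relI: "\<pi>1 r = \<zero>\<^bsub>Q1\<^esub>" if "r \<in> Lambda'_rels F \<theta> u" for r
    unfolding \<pi>1_def Q1_def I_def by (rule genideal_rel[OF sf Sc that])
  define EE where "EE = \<pi>1 (fgen E1)"
  define l2 where "l2 = (\<lambda>z. \<pi>1 (fgen (L2 z)))"
  define l3 where "l3 = (\<lambda>z. \<pi>1 (fgen (L3 z)))"
  define AA where "AA = \<pi>1 (fgen SAlpha)"
  define B0 where "B0 = \<pi>1 (fgen SBeta0)"
  define B1 where "B1 = \<pi>1 (fgen SBeta1)"
  define GG where "GG = \<pi>1 (fgen SGamma)"
  have k1app: "\<pi>1 (fscal c) = \<kappa>1 c" for c by (simp add: \<kappa>1_def)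
  have l2app: "\<pi>1 (fgen (L2 z)) = l2 z" for z by (simp add: l2_def)
  have l3app: "\<pi>1 (fgen (L3 z)) = l3 z" for z by (simp add: l3_def)
  note gdefs1 = k1app l2app l3app EE_def[symmetric] AA_def[symmetric] B0_def[symmetric]
    B1_def[symmetric] GG_def[symmetric]
  have cr1: "EE \<in> carrier Q1" "AA \<in> carrier Q1" "B0 \<in> carrier Q1" "B1 \<in> carrier Q1"
       "GG \<in> carrier Q1" "l2 z \<in> carrier Q1" "l3 z \<in> carrier Q1" for z
    unfolding EE_def AA_def B0_def B1_def GG_def l2_def l3_def by (simp_all add: P1.hc clq)
  note ps1 = P1.push_simps clq S(1,2) half
  have mem: "\<And>r. r \<in> TR_rels F \<theta> \<Longrightarrow> r \<in> Lambda'_rels F \<theta> u"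
    unfolding Lambda'_rels_def by blast
  have LQ1: "LamQ' Q1 F \<kappa>1 U V u \<theta> EE AA B0 B1 GG l2 l3"
  proof (rule LamQ'.intro[OF A1.alg_axioms], unfold_locales)
    show "U \<in> F" "V \<in> F" "U * V = 1" by (rule UF, rule VF, rule UV)
    show "u * u = U" by (simp add: U_def)
    show "\<theta> u = - u" by (rule d_thu[OF d])
    show "(2::'a) \<noteq> 0" by (rule two)
    show "EE \<in> carrier Q1" "AA \<in> carrier Q1" "B0 \<in> carrier Q1" "B1 \<in> carrier Q1"
       "GG \<in> carrier Q1" "l2 z \<in> carrier Q1" "l3 z \<in> carrier Q1" for z by (rule cr1)+
    show "EE \<otimes>\<^bsub>Q1\<^esub> EE = EE"
    proof -
      have "fgen E1 [*] fgen E1 [-] fgen E1 \<in> TR_rels F \<theta>" unfolding TR_rels_def by blast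
      from relI[OF mem[OF this]] show ?thesis using cr1 A1.\<kappa>one by (simp add: ps1 gdefs1 A1.minus_zero_eq)
    qed
    show "l2 z \<otimes>\<^bsub>Q1\<^esub> l2 w = l2 (z * w)" for z w
    proof -
      have "fgen (L2 z) [*] fgen (L2 w) [-] fgen (L2 (z * w)) \<in> TR_rels F \<theta>" unfolding TR_rels_def by blast
      from relI[OF mem[OF this]] show ?thesis using cr1 A1.\<kappa>one by (simp add: ps1 gdefs1 A1.minus_zero_eq)
    qed
    show "l3 z \<otimes>\<^bsub>Q1\<^esub> l3 w = l3 (z * w)" for z w
    proof -
      have "fgen (L3 z) [*] fgen (L3 w) [-] fgen (L3 (z * w)) \<in> TR_rels F \<theta>" unfolding TR_rels_def by blast
      from relI[OF mem[OF this]] show ?thesis using cr1 A1.\<kappa>one by (simp add: ps1 gdefs1 A1.minus_zero_eq)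
    qed
    show "l2 z \<oplus>\<^bsub>Q1\<^esub> l2 w = l2 (z + w)" for z w
    proof -
      have "fgen (L2 z) [+] fgen (L2 w) [-] fgen (L2 (z + w)) \<in> TR_rels F \<theta>" unfolding TR_rels_def by blast
      from relI[OF mem[OF this]] show ?thesis using cr1 A1.\<kappa>one by (simp add: ps1 gdefs1 A1.minus_zero_eq)
    qed
    show "l3 z \<oplus>\<^bsub>Q1\<^esub> l3 w = l3 (z + w)" for z w
    proof -
      have "fgen (L3 z) [+] fgen (L3 w) [-] fgen (L3 (z + w)) \<in> TR_rels F \<theta>" unfolding TR_rels_def by blast
      from relI[OF mem[OF this]] show ?thesis using cr1 A1.\<kappa>one by (simp add: ps1 gdefs1 A1.minus_zero_eq)
    qed
    show "\<kappa>1 c \<otimes>\<^bsub>Q1\<^esub> l2 1 = l2 c" if "c \<in> F" for c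
    proof -
      have "fscal c [*] fgen (L2 1) [-] fgen (L2 c) \<in> TR_rels F \<theta>" using that unfolding TR_rels_def by blast
      from relI[OF mem[OF this]] show ?thesis using cr1 that A1.\<kappa>one by (simp add: ps1 gdefs1 A1.minus_zero_eq)
    qed
    show "\<kappa>1 c \<otimes>\<^bsub>Q1\<^esub> l3 1 = l3 c" if "c \<in> F" for c
    proof -
      have "fscal c [*] fgen (L3 1) [-] fgen (L3 c) \<in> TR_rels F \<theta>" using that unfolding TR_rels_def by blast
      from relI[OF mem[OF this]] show ?thesis using cr1 that A1.\<kappa>one by (simp add: ps1 gdefs1 A1.minus_zero_eq)
    qed
    show "EE \<oplus>\<^bsub>Q1\<^esub> l2 1 \<oplus>\<^bsub>Q1\<^esub> l3 1 = \<one>\<^bsub>Q1\<^esub>"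
    proof -
      have "fgen E1 [+] fgen (L2 1) [+] fgen (L3 1) [-] fscal 1 \<in> TR_rels F \<theta>" unfolding TR_rels_def by blast
      from relI[OF mem[OF this]] show ?thesis using cr1 A1.\<kappa>one by (simp add: ps1 gdefs1 A1.minus_zero_eq)
    qed
    show "EE \<otimes>\<^bsub>Q1\<^esub> l2 z = \<zero>\<^bsub>Q1\<^esub>" for z
    proof -
      have "fgen E1 [*] fgen (L2 z) \<in> TR_rels F \<theta>" unfolding TR_rels_def by blast
      from relI[OF mem[OF this]] show ?thesis by (simp add: ps1 gdefs1)
    qed
    show "l2 z \<otimes>\<^bsub>Q1\<^esub> EE = \<zero>\<^bsub>Q1\<^esub>" for z
    proof -
      have "fgen (L2 z) [*] fgen E1 \<in> TR_rels F \<theta>" unfolding TR_rels_def by blast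
      from relI[OF mem[OF this]] show ?thesis by (simp add: ps1 gdefs1)
    qed
    show "EE \<otimes>\<^bsub>Q1\<^esub> l3 z = \<zero>\<^bsub>Q1\<^esub>" for z
    proof -
      have "fgen E1 [*] fgen (L3 z) \<in> TR_rels F \<theta>" unfolding TR_rels_def by blast
      from relI[OF mem[OF this]] show ?thesis by (simp add: ps1 gdefs1)
    qed
    show "l3 z \<otimes>\<^bsub>Q1\<^esub> EE = \<zero>\<^bsub>Q1\<^esub>" for z
    proof -
      have "fgen (L3 z) [*] fgen E1 \<in> TR_rels F \<theta>" unfolding TR_rels_def by blast
      from relI[OF mem[OF this]] show ?thesis by (simp add: ps1 gdefs1)
    qed
    show "l2 z \<otimes>\<^bsub>Q1\<^esub> l3 w = \<zero>\<^bsub>Q1\<^esub>" for z w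
    proof -
      have "fgen (L2 z) [*] fgen (L3 w) \<in> TR_rels F \<theta>" unfolding TR_rels_def by blast
      from relI[OF mem[OF this]] show ?thesis by (simp add: ps1 gdefs1)
    qed
    show "l3 w \<otimes>\<^bsub>Q1\<^esub> l2 z = \<zero>\<^bsub>Q1\<^esub>" for z w
    proof -
      have "fgen (L3 w) [*] fgen (L2 z) \<in> TR_rels F \<theta>" unfolding TR_rels_def by blast
      from relI[OF mem[OF this]] show ?thesis by (simp add: ps1 gdefs1)
    qed
    show "AA = EE \<otimes>\<^bsub>Q1\<^esub> AA \<otimes>\<^bsub>Q1\<^esub> l2 1"
    proof -
      have "fgen SAlpha [-] fgen E1 [*] fgen SAlpha [*] fgen (L2 1) \<in> TR_rels F \<theta>" unfolding TR_rels_def by blast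
      from relI[OF mem[OF this]] show ?thesis using cr1 A1.\<kappa>one by (simp add: ps1 gdefs1 A1.minus_zero_eq)
    qed
    show "B0 = l2 1 \<otimes>\<^bsub>Q1\<^esub> B0 \<otimes>\<^bsub>Q1\<^esub> l3 1"
    proof -
      have "fgen SBeta0 [-] fgen (L2 1) [*] fgen SBeta0 [*] fgen (L3 1) \<in> TR_rels F \<theta>" unfolding TR_rels_def by blast
      from relI[OF mem[OF this]] show ?thesis using cr1 A1.\<kappa>one by (simp add: ps1 gdefs1 A1.minus_zero_eq)
    qed
    show "B1 = l2 1 \<otimes>\<^bsub>Q1\<^esub> B1 \<otimes>\<^bsub>Q1\<^esub> l3 1"
    proof -
      have "fgen SBeta1 [-] fgen (L2 1) [*] fgen SBeta1 [*] fgen (L3 1) \<in> TR_rels F \<theta>" unfolding TR_rels_def by blast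
      from relI[OF mem[OF this]] show ?thesis using cr1 A1.\<kappa>one by (simp add: ps1 gdefs1 A1.minus_zero_eq)
    qed
    show "GG = l3 1 \<otimes>\<^bsub>Q1\<^esub> GG \<otimes>\<^bsub>Q1\<^esub> EE"
    proof -
      have "fgen SGamma [-] fgen (L3 1) [*] fgen SGamma [*] fgen E1 \<in> TR_rels F \<theta>" unfolding TR_rels_def by blast
      from relI[OF mem[OF this]] show ?thesis using cr1 A1.\<kappa>one by (simp add: ps1 gdefs1 A1.minus_zero_eq)
    qed
    show "B0 \<otimes>\<^bsub>Q1\<^esub> l3 z = l2 z \<otimes>\<^bsub>Q1\<^esub> B0" for z
    proof -
      have "fgen SBeta0 [*] fgen (L3 z) [-] fgen (L2 z) [*] fgen SBeta0 \<in> TR_rels F \<theta>" unfolding TR_rels_def by blast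
      from relI[OF mem[OF this]] show ?thesis using cr1 A1.\<kappa>one by (simp add: ps1 gdefs1 A1.minus_zero_eq)
    qed
    show "B1 \<otimes>\<^bsub>Q1\<^esub> l3 z = l2 (\<theta> z) \<otimes>\<^bsub>Q1\<^esub> B1" for z
    proof -
      have "fgen SBeta1 [*] fgen (L3 z) [-] fgen (L2 (\<theta> z)) [*] fgen SBeta1 \<in> TR_rels F \<theta>" unfolding TR_rels_def by blast
      from relI[OF mem[OF this]] show ?thesis using cr1 A1.\<kappa>one by (simp add: ps1 gdefs1 A1.minus_zero_eq)
    qed
    show "(B0 \<oplus>\<^bsub>Q1\<^esub> B1) \<otimes>\<^bsub>Q1\<^esub> GG = \<zero>\<^bsub>Q1\<^esub>"
      using relI[of "(fgen SBeta0 [+] fgen SBeta1) [*] fgen SGamma"]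
      by (simp add: ps1 gdefs1 Lambda'_rels_def)
    show "AA \<otimes>\<^bsub>Q1\<^esub> (B0 \<oplus>\<^bsub>Q1\<^esub> B1) = \<zero>\<^bsub>Q1\<^esub>"
      using relI[of "fgen SAlpha [*] (fgen SBeta0 [+] fgen SBeta1)"]
      by (simp add: ps1 gdefs1 Lambda'_rels_def)
    show "GG \<otimes>\<^bsub>Q1\<^esub> AA = \<zero>\<^bsub>Q1\<^esub>"
    proof -
      let ?Y = "l3 (inverse u) \<otimes>\<^bsub>Q1\<^esub> GG \<otimes>\<^bsub>Q1\<^esub> AA \<otimes>\<^bsub>Q1\<^esub> l2 u"
      have h1: "\<kappa>1 (1/2) \<otimes>\<^bsub>Q1\<^esub> (GG \<otimes>\<^bsub>Q1\<^esub> AA \<oplus>\<^bsub>Q1\<^esub> ?Y) = \<zero>\<^bsub>Q1\<^esub>"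
        using relI[of "fsmul (1/2) (fgen SGamma [*] fgen SAlpha
          [+] fgen (L3 (inverse u)) [*] fgen SGamma [*] fgen SAlpha [*] fgen (L2 u))"]
        by (simp add: ps1 gdefs1 Lambda'_rels_def)
      have h2: "\<kappa>1 (1/2) \<otimes>\<^bsub>Q1\<^esub> (GG \<otimes>\<^bsub>Q1\<^esub> AA \<ominus>\<^bsub>Q1\<^esub> ?Y) = \<zero>\<^bsub>Q1\<^esub>"
        using relI[of "fsmul (1/2) (fgen SGamma [*] fgen SAlpha
          [-] fgen (L3 (inverse u)) [*] fgen SGamma [*] fgen SAlpha [*] fgen (L2 u))"]
        by (simp add: ps1 gdefs1 Lambda'_rels_def)
      have "GG \<otimes>\<^bsub>Q1\<^esub> AA = \<kappa>1 (1/2) \<otimes>\<^bsub>Q1\<^esub> (GG \<otimes>\<^bsub>Q1\<^esub> AA \<oplus>\<^bsub>Q1\<^esub> ?Y) \<oplus>\<^bsub>Q1\<^esub>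
          \<kappa>1 (1/2) \<otimes>\<^bsub>Q1\<^esub> (GG \<otimes>\<^bsub>Q1\<^esub> AA \<ominus>\<^bsub>Q1\<^esub> ?Y)"
        by (rule A1.half1[OF two, symmetric]) (simp_all add: cr1)
      then show ?thesis using h1 h2 by simp
    qed
  qed
  interpret LQ1: LamQ' Q1 F \<kappa>1 U V u \<theta> EE AA B0 B1 GG l2 l3 by (rule LQ1)
  have cam: "ca (z * w) = ca z * ca w + cb z * cb w * U" for z w
    unfolding ca_def cb_def U_def by (rule co_mult(1)[OF d])
  have cbm: "cb (z * w) = ca z * cb w + cb z * ca w" for z w
    unfolding ca_def cb_def by (rule co_mult(2)[OF d])
  have caa: "ca (z + w) = ca z + ca w" "cb (z + w) = cb z + cb w" for z w
    unfolding ca_def cb_def by (rule co_add[OF d])+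
  have caF': "ca c = c" "cb c = 0" if "c \<in> F" for c
    unfolding ca_def cb_def using co_F[OF d that] by auto
  have ca1: "ca 1 = 1" "cb 1 = 0" unfolding ca_def cb_def by (rule co_1[OF d])+
  have cau: "ca u = 0" "cb u = 1" unfolding ca_def cb_def by (rule co_u[OF d])+
  have cath: "ca (\<theta> z) = ca z" "cb (\<theta> z) = - cb z" for z
    unfolding ca_def cb_def by (rule co_theta[OF d])+
  have cainv: "ca (inverse u) = 0" "cb (inverse u) = V"
    unfolding ca_def cb_def V_def U_def by (rule co_invu[OF d])+
  have cdec: "ca z + cb z * u = z" for z unfolding ca_def cb_def by (rule co_dec[OF d])
  define hF where "hF = \<pi>2 \<circ> subst \<phi>"
  interpret PF: push F Q2 hF unfolding hF_def Q2_def \<pi>2_def by (rule quot_push_subst[OF sf Jid \<phi>c])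
  have hFg: "hF (fgen E1) = e1" "hF (fgen (L2 z)) = LQ.P2 (ca z) (cb z)"
     "hF (fgen (L3 z)) = LQ.P3 (ca z) (cb z)" "hF (fgen SAlpha) = al"
     "hF (fgen SBeta0) = LQ.B0'" "hF (fgen SBeta1) = LQ.B1'" "hF (fgen SGamma) = ga" for z
    unfolding hF_def by (simp_all add: subst_fgen \<phi>_def ps2 gdefs2 LQ.P2_def LQ.P3_def LQ.B0'_def LQ.B1'_def VF)
  have keyF: "hF (p [-] q) = \<zero>\<^bsub>Q2\<^esub>" if "p \<in> falg_carrier F" "q \<in> falg_carrier F" "hF p = hF q" for p q
    using that by (simp add: PF.hs A2.eq_minus_zero PF.hc)
  have hFs: "hF (fscal c) = \<kappa>2 c" for c unfolding hF_def by (simp add: subst_fscal gdefs2)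
  note psF = PF.push_simps clq S(1,2) half hFg hFs
  have fS: "hF r = \<zero>\<^bsub>Q2\<^esub>" if "r \<in> Lambda'_rels F \<theta> u" for r
  proof -
    have f1: "hF (fgen E1 [*] fgen E1 [-] fgen E1) = \<zero>\<^bsub>Q2\<^esub>"
      by (rule keyF) (simp_all add: psF LQ.N)
    have f2: "hF (fgen (L2 z) [*] fgen (L2 w) [-] fgen (L2 (z * w))) = \<zero>\<^bsub>Q2\<^esub>" for z w
      by (rule keyF) (simp_all add: psF LQ.t1 cam cbm)
    have f3: "hF (fgen (L3 z) [*] fgen (L3 w) [-] fgen (L3 (z * w))) = \<zero>\<^bsub>Q2\<^esub>" for z w
      by (rule keyF) (simp_all add: psF LQ.t1' cam cbm)
    have f4: "hF (fgen (L2 z) [+] fgen (L2 w) [-] fgen (L2 (z + w))) = \<zero>\<^bsub>Q2\<^esub>" for z w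
      by (rule keyF) (simp_all add: psF LQ.t4 caa)
    have f5: "hF (fgen (L3 z) [+] fgen (L3 w) [-] fgen (L3 (z + w))) = \<zero>\<^bsub>Q2\<^esub>" for z w
      by (rule keyF) (simp_all add: psF LQ.t4' caa)
    have f6: "hF (fscal c [*] fgen (L2 1) [-] fgen (L2 c)) = \<zero>\<^bsub>Q2\<^esub>" if "c \<in> F" for c
      by (rule keyF) (use that in \<open>simp_all add: psF LQ.t6 caF' ca1\<close>)
    have f7: "hF (fscal c [*] fgen (L3 1) [-] fgen (L3 c)) = \<zero>\<^bsub>Q2\<^esub>" if "c \<in> F" for c
      by (rule keyF) (use that in \<open>simp_all add: psF LQ.t6' caF' ca1\<close>)
    have f8: "hF (fgen E1 [+] fgen (L2 1) [+] fgen (L3 1) [-] fscal 1) = \<zero>\<^bsub>Q2\<^esub>"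
      by (rule keyF) (simp_all add: psF ca1 LQ.t7 A2.\<kappa>one)
    have f9: "hF (fgen E1 [*] fgen (L2 z)) = \<zero>\<^bsub>Q2\<^esub>" "hF (fgen (L2 z) [*] fgen E1) = \<zero>\<^bsub>Q2\<^esub>"
      "hF (fgen E1 [*] fgen (L3 z)) = \<zero>\<^bsub>Q2\<^esub>" "hF (fgen (L3 z) [*] fgen E1) = \<zero>\<^bsub>Q2\<^esub>"
      "hF (fgen (L2 z) [*] fgen (L3 w)) = \<zero>\<^bsub>Q2\<^esub>" "hF (fgen (L3 w) [*] fgen (L2 z)) = \<zero>\<^bsub>Q2\<^esub>" for z w
      by (simp_all add: psF LQ.P2_def LQ.P3_def LQ.N)
    have f10: "hF (fgen SAlpha [-] fgen E1 [*] fgen SAlpha [*] fgen (L2 1)) = \<zero>\<^bsub>Q2\<^esub>"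
      "hF (fgen SBeta0 [-] fgen (L2 1) [*] fgen SBeta0 [*] fgen (L3 1)) = \<zero>\<^bsub>Q2\<^esub>"
      "hF (fgen SBeta1 [-] fgen (L2 1) [*] fgen SBeta1 [*] fgen (L3 1)) = \<zero>\<^bsub>Q2\<^esub>"
      "hF (fgen SGamma [-] fgen (L3 1) [*] fgen SGamma [*] fgen E1) = \<zero>\<^bsub>Q2\<^esub>"
      by (rule keyF; simp add: psF ca1 LQ.P2_10 LQ.B0'_def LQ.B1'_def LQ.N)+
    have f11: "hF (fgen SBeta0 [*] fgen (L3 z) [-] fgen (L2 z) [*] fgen SBeta0) = \<zero>\<^bsub>Q2\<^esub>" for z
      by (rule keyF) (simp_all add: psF LQ.t11)
    have f12: "hF (fgen SBeta1 [*] fgen (L3 z) [-] fgen (L2 (\<theta> z)) [*] fgen SBeta1) = \<zero>\<^bsub>Q2\<^esub>" for z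
      by (rule keyF) (simp_all add: psF LQ.t12 cath)
    have f13: "hF ((fgen SBeta0 [+] fgen SBeta1) [*] fgen SGamma) = \<zero>\<^bsub>Q2\<^esub>"
      "hF (fgen SAlpha [*] (fgen SBeta0 [+] fgen SBeta1)) = \<zero>\<^bsub>Q2\<^esub>"
      by (simp_all add: psF LQ.Bsum LQ.zr)
    have f14: "hF (fsmul (1/2) (fgen SGamma [*] fgen SAlpha
          [+] fgen (L3 (inverse u)) [*] fgen SGamma [*] fgen SAlpha [*] fgen (L2 u))) = \<zero>\<^bsub>Q2\<^esub>"
      "hF (fsmul (1/2) (fgen SGamma [*] fgen SAlpha
          [-] fgen (L3 (inverse u)) [*] fgen SGamma [*] fgen SAlpha [*] fgen (L2 u))) = \<zero>\<^bsub>Q2\<^esub>"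
      by (simp_all add: psF cainv cau VF LQ.P2_def LQ.P3_def LQ.N)
    show ?thesis using that
      unfolding Lambda'_rels_def TR_rels_def
      by (elim UnE insertE CollectE emptyE exE conjE; simp only: f1 f2 f3 f4 f5 f6 f7 f8 f9 f10 f11 f12 f13 f14)
  qed
  define hG where "hG = \<pi>1 \<circ> subst \<psi>"
  interpret PG: push F Q1 hG unfolding hG_def Q1_def \<pi>1_def by (rule quot_push_subst[OF sf Iid \<psi>c])
  have hGg: "hG (fgen V1) = EE" "hG (fgen V2) = l2 1" "hG (fgen V3) = l3 1" "hG (fgen QAlpha) = AA"
     "hG (fgen QBeta) = B0 \<oplus>\<^bsub>Q1\<^esub> B1" "hG (fgen QGamma) = GG" "hG (fgen QS2) = l2 u"
     "hG (fgen QS3) = l3 u"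
    unfolding hG_def by (simp_all add: subst_fgen \<psi>_def ps1 gdefs1)
  have hGs: "hG (fscal c) = \<kappa>1 c" for c unfolding hG_def by (simp add: subst_fscal gdefs1)
  have keyG: "hG (p [-] q) = \<zero>\<^bsub>Q1\<^esub>" if "p \<in> falg_carrier F" "q \<in> falg_carrier F" "hG p = hG q" for p q
    using that by (simp add: PG.hs A1.eq_minus_zero PG.hc)
  note psG = PG.push_simps clq S(1,2) half hGg hGs
  have gT: "hG r = \<zero>\<^bsub>Q1\<^esub>" if "r \<in> Lambda_rels u" for r
  proof -
    have g1: "hG (fgen (qvert i) [*] fgen (qvert j) [-] (if i = j then fgen (qvert i) else (\<lambda>w. 0))) = \<zero>\<^bsub>Q1\<^esub>"
      if "i \<in> {1,2,3}" "j \<in> {1,2,3}" for i j :: nat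
    proof -
      have q: "i = 1 \<or> i = 2 \<or> i = 3" "j = 1 \<or> j = 2 \<or> j = 3" using that by auto
      have c00: "hG (fgen V1 [*] fgen V1 [-] fgen V1) = \<zero>\<^bsub>Q1\<^esub>"
        by (rule keyG) (simp_all add: psG LQ1.l2m LQ1.l3m LQ1.EE)
      have c01: "hG (fgen V1 [*] fgen V2 [-] (\<lambda>w. 0)) = \<zero>\<^bsub>Q1\<^esub>"
        by (rule keyG) (simp_all add: psG LQ1.orth)
      have c02: "hG (fgen V1 [*] fgen V3 [-] (\<lambda>w. 0)) = \<zero>\<^bsub>Q1\<^esub>"
        by (rule keyG) (simp_all add: psG LQ1.orth)
      have c10: "hG (fgen V2 [*] fgen V1 [-] (\<lambda>w. 0)) = \<zero>\<^bsub>Q1\<^esub>"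
        by (rule keyG) (simp_all add: psG LQ1.orth)
      have c11: "hG (fgen V2 [*] fgen V2 [-] fgen V2) = \<zero>\<^bsub>Q1\<^esub>"
        by (rule keyG) (simp_all add: psG LQ1.l2m LQ1.l3m LQ1.EE)
      have c12: "hG (fgen V2 [*] fgen V3 [-] (\<lambda>w. 0)) = \<zero>\<^bsub>Q1\<^esub>"
        by (rule keyG) (simp_all add: psG LQ1.orth)
      have c20: "hG (fgen V3 [*] fgen V1 [-] (\<lambda>w. 0)) = \<zero>\<^bsub>Q1\<^esub>"
        by (rule keyG) (simp_all add: psG LQ1.orth)
      have c21: "hG (fgen V3 [*] fgen V2 [-] (\<lambda>w. 0)) = \<zero>\<^bsub>Q1\<^esub>"
        by (rule keyG) (simp_all add: psG LQ1.orth)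
      have c22: "hG (fgen V3 [*] fgen V3 [-] fgen V3) = \<zero>\<^bsub>Q1\<^esub>"
        by (rule keyG) (simp_all add: psG LQ1.l2m LQ1.l3m LQ1.EE)
      from q show ?thesis by (elim disjE) (simp_all add: qv c00 c01 c02 c10 c11 c12 c20 c21 c22)
    qed
    have g2: "hG (fgen V1 [+] fgen V2 [+] fgen V3 [-] fscal 1) = \<zero>\<^bsub>Q1\<^esub>"
      by (rule keyG) (simp_all add: psG LQ1.sum1 A1.\<kappa>one)
    have g3: "hG (fgen QAlpha [-] fgen V1 [*] fgen QAlpha [*] fgen V2) = \<zero>\<^bsub>Q1\<^esub>"
      "hG (fgen QBeta [-] fgen V2 [*] fgen QBeta [*] fgen V3) = \<zero>\<^bsub>Q1\<^esub>"
      "hG (fgen QGamma [-] fgen V3 [*] fgen QGamma [*] fgen V1) = \<zero>\<^bsub>Q1\<^esub>"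
      "hG (fgen QS2 [-] fgen V2 [*] fgen QS2 [*] fgen V2) = \<zero>\<^bsub>Q1\<^esub>"
      "hG (fgen QS3 [-] fgen V3 [*] fgen QS3 [*] fgen V3) = \<zero>\<^bsub>Q1\<^esub>"
      by (rule keyG; simp add: psG LQ1.sand1 LQ1.l2one A1.m_assoc A1.l_distr A1.r_distr)+
    have g4: "hG (fgen QAlpha [*] fgen QBeta) = \<zero>\<^bsub>Q1\<^esub>"
      "hG (fgen QBeta [*] fgen QGamma) = \<zero>\<^bsub>Q1\<^esub>" "hG (fgen QGamma [*] fgen QAlpha) = \<zero>\<^bsub>Q1\<^esub>"
      by (simp_all add: psG LQ1.zr)
    have g5: "hG (fgen QS2 [*] fgen QS2 [-] fsmul (u * u) (fgen V2)) = \<zero>\<^bsub>Q1\<^esub>"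
      "hG (fgen QS3 [*] fgen QS3 [-] fsmul (u * u) (fgen V3)) = \<zero>\<^bsub>Q1\<^esub>"
      by (rule keyG; simp add: psG LQ1.l2m LQ1.l3m LQ1.l2s LQ1.l3s UF[unfolded U_def])+
    show ?thesis using that
      unfolding Lambda_rels_def pathalg_rels_def
    proof (elim UnE)
      assume "r \<in> {fgen (qvert i) [*] fgen (qvert j) [-] (if i = j then fgen (qvert i) else (\<lambda>w. 0))
        | i j. i \<in> {1,2,3} \<and> j \<in> {1,2,3}}"
      then obtain i j where "r = fgen (qvert i) [*] fgen (qvert j) [-] (if i = j then fgen (qvert i) else (\<lambda>w. 0))"
        "i \<in> {1,2,3}" "j \<in> {1,2,3}" by blast
      then show ?thesis using g1 by simp
    qed (elim insertE emptyE; simp only: g2 g3 g4 g5)+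
  qed
  have inv1: "\<pi>1 (subst \<psi> (\<phi> x)) = \<pi>1 (fgen x)" for x
  proof -
    have "hG (\<phi> x) = \<pi>1 (fgen x)"
      by (cases x) (simp_all add: \<phi>_def psG gdefs1 VF LQ1.coord_l2 LQ1.coord_l3 cdec
          LQ1.inv_b0 LQ1.inv_b1)
    then show ?thesis by (simp add: hG_def)
  qed
  have inv2: "\<pi>2 (subst \<phi> (\<psi> y)) = \<pi>2 (fgen y)" for y
  proof -
    have "hF (\<psi> y) = \<pi>2 (fgen y)"
      by (cases y) (simp_all add: \<psi>_def psF gdefs2 ca1 cau LQ.P2_10 LQ.Bsum)
    then show ?thesis by (simp add: hF_def)
  qed
  show ?thesis
  proof (rule abstract_iso[OF sf Sc Tc \<phi>c \<psi>c])
    fix r assume r: "r \<in> Lambda'_rels F \<theta> u"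
    have "hF r = \<zero>\<^bsub>Q2\<^esub>" by (rule fS[OF r])
    then show "subst \<phi> r \<in> genideal (free_alg F) (Lambda_rels u)"
      unfolding J_def[symmetric]
      by (intro zero_coset_mem[OF sf Jid]) (use r Sc \<phi>c in \<open>auto simp: hF_def \<pi>2_def Q2_def intro: subst_closed[OF sf]\<close>)
  next
    fix r assume r: "r \<in> Lambda_rels u"
    have "hG r = \<zero>\<^bsub>Q1\<^esub>" by (rule gT[OF r])
    then show "subst \<psi> r \<in> genideal (free_alg F) (Lambda'_rels F \<theta> u)"
      unfolding I_def[symmetric]
      by (intro zero_coset_mem[OF sf Iid]) (use r Tc \<psi>c in \<open>auto simp: hG_def \<pi>1_def Q1_def intro: subst_closed[OF sf]\<close>)
  next
    fix x show "genideal (free_alg F) (Lambda'_rels F \<theta> u) +>\<^bsub>free_alg F\<^esub> subst \<psi> (\<phi> x) =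
        genideal (free_alg F) (Lambda'_rels F \<theta> u) +>\<^bsub>free_alg F\<^esub> fgen x"
      using inv1[of x] by (simp add: \<pi>1_def I_def)
  next
    fix y show "genideal (free_alg F) (Lambda_rels u) +>\<^bsub>free_alg F\<^esub> subst \<phi> (\<psi> y) =
        genideal (free_alg F) (Lambda_rels u) +>\<^bsub>free_alg F\<^esub> fgen y"
      using inv2[of y] by (simp add: \<pi>2_def J_def)
  qed
qed

end
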